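(* The subspace $\mathfrak t_0=\mathrm{span}\{H_1,H_2,Z,\tilde r_1,\tilde r_2\}$ is an abelian Lie subalgebra of $\mathfrak O_\kappa$, i.e. the elements $H_1,H_2,Z,\tilde r_1,\tilde r_2$ of $\mathfrak O_\kappa$ pairwise commute.
   Context: Let $V_{\mathbb R}=\mathbb R^4$ with standard inner product $(\cdot,\cdot)$ and orthonormal basis $x_1,\dots,x_4$; $V=\mathbb C^4$ with bilinear extension; $B(x)(y)=(x,y)$. Fix positive integers $m_1,m_2$. $R\subset V_\mathbb R$ consists of $\alpha_p=(\sin(p\pi/m_1),-\cos(p\pi/m_1),0,0)$ ($p=1,\dots,2m_1$) and $\beta_q=(0,0,\sin(q\pi/m_2),-\cos(q\pi/m_2))$ ($q=1,\dots,2m_2$); $R_+=\{\alpha_1,\dots,\alpha_{m_1},\beta_1,\dots,\beta_{m_2}\}$; reflections $s_\alpha(x)=x-2\frac{(x,\alpha)}{(\alpha,\alpha)}\alpha$ generate $W\cong D_{2m_1}\times D_{2m_2}$. $\kappa:R\to\mathbb C$ is $W$-invariant. $H_\kappa$: quotient of $T(V\oplus V^* )\rtimes\mathbb CW$ by $[x,y]=0=[\xi,\eta]$, $[\xi,x]=\xi(x)+\sum_{\alpha\in R_+}\frac{2\kappa_\alpha}{(\alpha,\alpha)}(B^{-1}(\xi),\alpha)(x,\alpha)s_\alpha$. $\mathcal C$: Clifford algebra on $e_1,\dots,e_4$ ($e_je_k+e_ke_j=2\delta_{jk}$, $e_j$ odd); $\gamma:\bigwedge V\to\mathcal C$ antisymmetrisation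 ($\gamma(x_j)=e_j$, $\gamma(v_1\wedge\cdots\wedge v_p)=\frac1{p!}\sum_{g\in S_p}\mathrm{sgn}(g)\gamma(v_{g(1)})\cdots\gamma(v_{g(p)})$). On $H_\kappa\otimes\mathcal C$ (graded via $\mathcal C$): $[\![a,b]\!]=ab-(-1)^{|a||b|}ba$. With $\xi_j=B(x_j)$, $\underline D=\sum\xi_j\otimes e_j$, $\underline x=\sum x_j\otimes e_j$, $\Delta_\kappa=\sum\xi_j^2$, $|x|^2=\sum x_j^2$, $E=\frac12\sum(x_j\xi_j+\xi_jx_j)$ span $\mathfrak g$; $\mathfrak O_\kappa$ is the graded centraliser of $\mathfrak g$ in $H_\kappa\otimes\mathcal C$. $\tilde W\subset\mathcal C^\times$ generated by the $\gamma(\alpha)$, $\alpha\in R$, is embedded in $\mathfrak O_\kappa$ by $\tilde w\mapsto\pi(\tilde w)\otimes\tilde w$ ($\pi(\gamma(\alpha))=s_\alpha$); $\tilde s_p,\tilde t_q$ images of $\gamma(\alpha_p),\gamma(\beta_q)$; $\tilde r_1=-\tilde s_{m_1}\tilde s_1$, $\tilde r_2=-\tilde t_{m_2}\tilde t_1$. $O(v)=-\frac12P(\gamma(v))$ with $P=\mathrm{id}-\frac12\mathrm{ad}(\underline D)\mathrm{ad}(\underline x)$, $\mathrm{ad}(a)b=[\![a,b]\!]$; $z_a^\pm=x_{2a-1}\pm ix_{2a}$. $H_a=\frac12O(z_a^+\wedge z_a^-)$ ($a=1,2$), $Z=O(x_1\wedge x_2\wedge x_3\wedge x_4)$. *)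

theory Defs
  imports Complex_Main "HOL-Combinatorics.Permutations"
begin

text \<open>Vectors of V_R = R^4 are functions nat => real supported on {1..4};
  4x4 matrices are functions nat => nat => real supported on {1..4} x {1..4}.\<close>

definition inner4 :: "(nat \<Rightarrow> real) \<Rightarrow> (nat \<Rightarrow> real) \<Rightarrow> real" where
  "inner4 u v = (\<Sum>j\<in>{1..4}. u j * v j)"

definition alpha :: "nat \<Rightarrow> nat \<Rightarrow> nat \<Rightarrow> real" where
  "alpha m1 p = (\<lambda>j. if j = 1 then sin (real p * pi / real m1)
                     else if j = 2 then - cos (real p * pi / real m1) else 0)"

definition beta :: "nat \<Rightarrow> nat \<Rightarrow> nat \<Rightarrow> real" where
  "beta m2 q = (\<lambda>j. if j = 3 then sin (real q * pi / real m2)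
                     else if j = 4 then - cos (real q * pi / real m2) else 0)"

definition roots :: "nat \<Rightarrow> nat \<Rightarrow> (nat \<Rightarrow> real) set" where
  "roots m1 m2 = {alpha m1 p | p. p \<in> {1..2*m1}} \<union> {beta m2 q | q. q \<in> {1..2*m2}}"

definition pos_roots :: "nat \<Rightarrow> nat \<Rightarrow> (nat \<Rightarrow> real) set" where
  "pos_roots m1 m2 = {alpha m1 p | p. p \<in> {1..m1}} \<union> {beta m2 q | q. q \<in> {1..m2}}"

definition id4 :: "nat \<Rightarrow> nat \<Rightarrow> real" where
  "id4 i j = (if i \<in> {1..4} \<and> j \<in> {1..4} \<and> i = j then 1 else 0)"

definition mat_mul :: "(nat \<Rightarrow> nat \<Rightarrow> real) \<Rightarrow> (nat \<Rightarrow> nat \<Rightarrow> real) \<Rightarrow> nat \<Rightarrow> nat \<Rightarrow> real" where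
  "mat_mul A B i j = (\<Sum>k\<in>{1..4}. A i k * B k j)"

definition mat_vec :: "(nat \<Rightarrow> nat \<Rightarrow> real) \<Rightarrow> (nat \<Rightarrow> real) \<Rightarrow> nat \<Rightarrow> real" where
  "mat_vec A v i = (\<Sum>k\<in>{1..4}. A i k * v k)"

text \<open>Matrix of the reflection s_alpha(x) = x - 2 (x,alpha)/(alpha,alpha) alpha.\<close>
definition refl_mat :: "(nat \<Rightarrow> real) \<Rightarrow> nat \<Rightarrow> nat \<Rightarrow> real" where
  "refl_mat a i j = (if i \<in> {1..4} \<and> j \<in> {1..4}
      then (if i = j then 1 else 0) - 2 * a i * a j / inner4 a a else 0)"

inductive_set weyl :: "nat \<Rightarrow> nat \<Rightarrow> (nat \<Rightarrow> nat \<Rightarrow> real) set" for m1 m2 where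
  weyl_id: "id4 \<in> weyl m1 m2"
| weyl_refl: "w \<in> weyl m1 m2 \<Longrightarrow> a \<in> roots m1 m2 \<Longrightarrow> mat_mul (refl_mat a) w \<in> weyl m1 m2"

text \<open>An identity holds in H_kappa (x) C iff it holds in every complex algebra generated by
  elements satisfying the defining relations (universal property of the presentation).
  A complex algebra is a ring 'a with a central ring homomorphism c from the complex numbers.
  x j = image of x_j, xi j = image of xi_j = B(x_j), g w = image of w in W,
  e j = image of 1 (x) e_j.  H_kappa is purely even, so e_j commutes with its image.\<close>

definition CH_model ::
  "nat \<Rightarrow> nat \<Rightarrow> ((nat \<Rightarrow> real) \<Rightarrow> complex) \<Rightarrow> (complex \<Rightarrow> 'a::ring_1) \<Rightarrow>
   (nat \<Rightarrow> 'a) \<Rightarrow> (nat \<Rightarrow> 'a) \<Rightarrow> ((nat \<Rightarrow> nat \<Rightarrow> real) \<Rightarrow> 'a) \<Rightarrow> (nat \<Rightarrow> 'a) \<Rightarrow> bool" where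
  "CH_model m1 m2 \<kappa> c x xi g e \<longleftrightarrow>
     (\<forall>a b. c (a + b) = c a + c b) \<and> (\<forall>a b. c (a * b) = c a * c b) \<and> c 1 = 1 \<and>
     (\<forall>a y. c a * y = y * c a) \<and>
     (\<forall>j\<in>{1..4}. \<forall>k\<in>{1..4}. x j * x k = x k * x j) \<and>
     (\<forall>j\<in>{1..4}. \<forall>k\<in>{1..4}. xi j * xi k = xi k * xi j) \<and>
     (\<forall>j\<in>{1..4}. \<forall>k\<in>{1..4}. xi j * x k - x k * xi j =
        (if j = k then 1 else 0) +
        (\<Sum>a\<in>pos_roots m1 m2. c (2 * \<kappa> a / complex_of_real (inner4 a a)
              * complex_of_real (a j) * complex_of_real (a k)) * g (refl_mat a))) \<and>
     g id4 = 1 \<and>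
     (\<forall>w\<in>weyl m1 m2. \<forall>w'\<in>weyl m1 m2. g (mat_mul w w') = g w * g w') \<and>
     (\<forall>w\<in>weyl m1 m2. \<forall>j\<in>{1..4}.
        g w * x j = (\<Sum>k\<in>{1..4}. c (complex_of_real (w k j)) * x k) * g w) \<and>
     (\<forall>w\<in>weyl m1 m2. \<forall>j\<in>{1..4}.
        g w * xi j = (\<Sum>k\<in>{1..4}. c (complex_of_real (w k j)) * xi k) * g w) \<and>
     (\<forall>j\<in>{1..4}. \<forall>k\<in>{1..4}. e j * e k + e k * e j = (if j = k then 2 else 0)) \<and>
     (\<forall>j\<in>{1..4}. \<forall>k\<in>{1..4}. e j * x k = x k * e j \<and> e j * xi k = xi k * e j) \<and>
     (\<forall>j\<in>{1..4}. \<forall>w\<in>weyl m1 m2. e j * g w = g w * e j)"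

text \<open>gamma on V (complex vectors given by coordinates) and on decomposable p-vectors.\<close>
definition gvec :: "(complex \<Rightarrow> 'a::ring_1) \<Rightarrow> (nat \<Rightarrow> 'a) \<Rightarrow> (nat \<Rightarrow> complex) \<Rightarrow> 'a" where
  "gvec c e v = (\<Sum>j\<in>{1..4}. c (v j) * e j)"

definition gwedge :: "(complex \<Rightarrow> 'a::ring_1) \<Rightarrow> (nat \<Rightarrow> 'a) \<Rightarrow> (nat \<Rightarrow> complex) list \<Rightarrow> 'a" where
  "gwedge c e vs = c (1 / of_nat (fact (length vs))) *
     (\<Sum>\<sigma>\<in>{\<sigma>. \<sigma> permutes {0..<length vs}}.
        c (of_int (sign \<sigma>)) * prod_list (map (\<lambda>i. gvec c e (vs ! \<sigma> i)) [0..<length vs]))"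

definition xu :: "(nat \<Rightarrow> 'a::ring_1) \<Rightarrow> (nat \<Rightarrow> 'a) \<Rightarrow> 'a" where
  "xu x e = (\<Sum>j\<in>{1..4}. x j * e j)"

definition Du :: "(nat \<Rightarrow> 'a::ring_1) \<Rightarrow> (nat \<Rightarrow> 'a) \<Rightarrow> 'a" where
  "Du xi e = (\<Sum>j\<in>{1..4}. xi j * e j)"

text \<open>Graded commutator of homogeneous elements; parity True = odd.\<close>
definition gcomm :: "'a::ring_1 \<Rightarrow> bool \<Rightarrow> 'a \<Rightarrow> bool \<Rightarrow> 'a" where
  "gcomm a pa b pb = (if pa \<and> pb then a * b + b * a else a * b - b * a)"

definition Pop :: "(complex \<Rightarrow> 'a::ring_1) \<Rightarrow> (nat \<Rightarrow> 'a) \<Rightarrow> (nat \<Rightarrow> 'a) \<Rightarrow> (nat \<Rightarrow> 'a) \<Rightarrow> 'a \<Rightarrow> bool \<Rightarrow> 'a" where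
  "Pop c x xi e y py = y - c (1/2) * gcomm (Du xi e) True (gcomm (xu x e) True y py) (\<not> py)"

text \<open>O(v1 /\ ... /\ vp) = -1/2 P(gamma(v1 /\ ... /\ vp)); gamma of a p-vector has parity p mod 2.\<close>
definition Oop :: "(complex \<Rightarrow> 'a::ring_1) \<Rightarrow> (nat \<Rightarrow> 'a) \<Rightarrow> (nat \<Rightarrow> 'a) \<Rightarrow> (nat \<Rightarrow> 'a) \<Rightarrow> (nat \<Rightarrow> complex) list \<Rightarrow> 'a" where
  "Oop c x xi e vs = - (c (1/2) * Pop c x xi e (gwedge c e vs) (odd (length vs)))"

definition zplus :: "nat \<Rightarrow> nat \<Rightarrow> complex" where
  "zplus a = (\<lambda>j. if j = 2*a - 1 then 1 else if j = 2*a then \<i> else 0)"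

definition zminus :: "nat \<Rightarrow> nat \<Rightarrow> complex" where
  "zminus a = (\<lambda>j. if j = 2*a - 1 then 1 else if j = 2*a then - \<i> else 0)"

definition basisv :: "nat \<Rightarrow> nat \<Rightarrow> complex" where
  "basisv i = (\<lambda>j. if j = i then 1 else 0)"

text \<open>Image of gamma(alpha) in W~ inside H (x) C: pi(gamma(alpha)) (x) gamma(alpha) = s_alpha (x) gamma(alpha).\<close>
definition stilde :: "(complex \<Rightarrow> 'a::ring_1) \<Rightarrow> ((nat \<Rightarrow> nat \<Rightarrow> real) \<Rightarrow> 'a) \<Rightarrow> (nat \<Rightarrow> 'a) \<Rightarrow> (nat \<Rightarrow> real) \<Rightarrow> 'a" where
  "stilde c g e a = g (refl_mat a) * gvec c e (\<lambda>j. complex_of_real (a j))"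

end

theory Submission
  imports Defs
begin



lemma slide:
  fixes v :: "'a::ring_1"
  assumes "\<forall>y\<in>set ys. v * y = - (y * v)"
  shows "v * prod_list ys = (-1) ^ length ys * (prod_list ys * v)"
  using assms
proof (induction ys)
  case Nil then show ?case by simp
next
  case (Cons y ys)
  have "v * prod_list (y # ys) = (v * y) * prod_list ys" by (simp add: mult.assoc)
  also have "\<dots> = - (y * (v * prod_list ys))" using Cons.prems by (simp add: mult.assoc)
  also have "\<dots> = - (y * ((-1) ^ length ys * (prod_list ys * v)))" using Cons by simp
  also have "\<dots> = (-1) ^ length (y # ys) * (prod_list (y # ys) * v)"
  proof (cases "even (length ys)")
    case True then show ?thesis by (simp add: mult.assoc)
  next
    case False then show ?thesis by (simp add: mult.assoc)
  qed
  finally show ?case .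
qed

lemma neg1_pow_comm: "((-1::'a::ring_1) ^ k) * y = y * (-1) ^ k"
  by (cases "even k") simp_all

lemma transp_prod:
  fixes u :: "nat \<Rightarrow> 'a::ring_1"
  assumes ac: "\<And>i j. i < n \<Longrightarrow> j < n \<Longrightarrow> i \<noteq> j \<Longrightarrow> u i * u j = - (u j * u i)"
    and ab: "a < b" "b < n"
  shows "prod_list (map (\<lambda>i. u (Transposition.transpose a b i)) [0..<n]) = - prod_list (map u [0..<n])"
proof -
  have L: "[0..<n] = [0..<a] @ a # [Suc a..<b] @ b # [Suc b..<n]"
  proof -
    have "[0..<n] = [0..<a] @ [a..<n]" using upt_add_eq_append[of 0 a "n-a"] ab by simp
    also have "[a..<n] = a # [Suc a..<n]" using ab by (simp add: upt_conv_Cons)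
    also have "[Suc a..<n] = [Suc a..<b] @ [b..<n]" using ab
      using upt_add_eq_append[of "Suc a" b "n-b"] by simp
    also have "[b..<n] = b # [Suc b..<n]" using ab by (simp add: upt_conv_Cons)
    finally show ?thesis by simp
  qed
  have m1: "map (\<lambda>i. u (Transposition.transpose a b i)) [0..<a] = map u [0..<a]"
    by (rule map_cong) (use ab in auto)
  have m2: "map (\<lambda>i. u (Transposition.transpose a b i)) [Suc a..<b] = map u [Suc a..<b]"
    by (rule map_cong) (use ab in auto)
  have m3: "map (\<lambda>i. u (Transposition.transpose a b i)) [Suc b..<n] = map u [Suc b..<n]"
    by (rule map_cong) (use ab in auto)
  define P1 where "P1 = prod_list (map u [0..<a])"
  define Pm where "Pm = prod_list (map u [Suc a..<b])"
  define P3 where "P3 = prod_list (map u [Suc b..<n])"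
  define k where "k = length (map u [Suc a..<b])"
  have sa: "u a * Pm = (-1)^k * (Pm * u a)" unfolding Pm_def k_def
    proof (rule slide)
      show "\<forall>y\<in>set (map u [Suc a..<b]). u a * y = - (y * u a)"
      proof
        fix y assume "y \<in> set (map u [Suc a..<b])"
        then obtain i where i: "Suc a \<le> i" "i < b" "y = u i" by auto
        show "u a * y = - (y * u a)" unfolding i(3) using i(1,2) ab by (intro ac) auto
      qed
    qed
  have sb: "u b * Pm = (-1)^k * (Pm * u b)" unfolding Pm_def k_def
    proof (rule slide)
      show "\<forall>y\<in>set (map u [Suc a..<b]). u b * y = - (y * u b)"
      proof
        fix y assume "y \<in> set (map u [Suc a..<b])"
        then obtain i where i: "Suc a \<le> i" "i < b" "y = u i" by auto
        show "u b * y = - (y * u b)" unfolding i(3) using i(1,2) ab by (intro ac) auto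
      qed
    qed
  have ba: "u b * u a = - (u a * u b)" using ab by (intro ac) auto
  have "u b * (Pm * (u a * P3)) = (u b * Pm) * u a * P3" by (simp add: mult.assoc)
  also have "\<dots> = (-1)^k * (Pm * (u b * u a)) * P3" by (simp add: sb mult.assoc)
  also have "\<dots> = - ((-1)^k * (Pm * (u a * u b)) * P3)" by (simp add: ba)
  also have "\<dots> = - ((u a * Pm) * u b * P3)" by (simp add: sa mult.assoc)
  finally have key: "u b * (Pm * (u a * P3)) = - (u a * (Pm * (u b * P3)))" by (simp add: mult.assoc)
  show ?thesis
    apply (subst (1 2) L)
    apply (simp only: map_append list.map m1 m2 m3 prod_list.append prod_list.Cons)
    using ab by (simp add: P1_def[symmetric] Pm_def[symmetric] P3_def[symmetric] key)
qed

lemma perm_prod: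
  assumes "\<sigma> permutes {0..<n}"
  shows "\<forall>u::nat \<Rightarrow> 'a::ring_1. (\<forall>i j. i < n \<longrightarrow> j < n \<longrightarrow> i \<noteq> j \<longrightarrow> u i * u j = - (u j * u i)) \<longrightarrow>
     prod_list (map (\<lambda>i. u (\<sigma> i)) [0..<n]) = of_int (sign \<sigma>) * prod_list (map u [0..<n])"
  using assms(1) finite_atLeastLessThan
proof (induction rule: permutes_induct)
  case id then show ?case by simp
next
  case (swap a b p)
  show ?case
  proof (intro allI impI)
    fix u :: "nat \<Rightarrow> 'a" assume ac: "\<forall>i j. i < n \<longrightarrow> j < n \<longrightarrow> i \<noteq> j \<longrightarrow> u i * u j = - (u j * u i)"
    define v where "v = (\<lambda>i. u (Transposition.transpose a b i))"
    have acv: "\<forall>i j. i < n \<longrightarrow> j < n \<longrightarrow> i \<noteq> j \<longrightarrow> v i * v j = - (v j * v i)"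
    proof (intro allI impI)
      fix i j assume ij: "i < n" "j < n" "i \<noteq> j"
      have "Transposition.transpose a b i < n" "Transposition.transpose a b j < n"
        using ij swap.hyps(1,2) by (auto simp: transpose_def)
      moreover have "Transposition.transpose a b i \<noteq> Transposition.transpose a b j"
        using ij by (metis transpose_eq_iff)
      ultimately show "v i * v j = - (v j * v i)" unfolding v_def using ac by blast
    qed
    have tv: "prod_list (map v [0..<n]) = - prod_list (map u [0..<n])"
    proof -
      have ac': "\<And>i j. i<n \<Longrightarrow> j<n \<Longrightarrow> i\<noteq>j \<Longrightarrow> u i * u j = -(u j * u i)" using ac by blast
      have an: "a < n" "b < n" using swap.hyps(1,2) by auto
      show ?thesis
      proof (cases "a < b")
        case True then show ?thesis unfolding v_def
          using transp_prod[of n u a b, OF ac'] an by blast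
      next
        case False then have "b < a" using swap.hyps(3) by auto
        then show ?thesis unfolding v_def
          using transp_prod[of n u b a, OF ac'] an by (simp add: transpose_commute)
      qed
    qed
    have pp: "permutation p" using swap.hyps(4) permutes_imp_permutation by blast
    have sg: "sign (Transposition.transpose a b \<circ> p) = - sign p"
      using swap.hyps pp by (simp add: sign_compose sign_swap_id permutation_swap_id)
    have "prod_list (map (\<lambda>i. u ((Transposition.transpose a b \<circ> p) i)) [0..<n])
        = prod_list (map (\<lambda>i. v (p i)) [0..<n])" by (simp add: v_def)
    also have "\<dots> = of_int (sign p) * prod_list (map v [0..<n])" by (rule mp[OF spec[OF swap.IH, of v] acv])
    also have "\<dots> = of_int (sign (Transposition.transpose a b \<circ> p)) * prod_list (map u [0..<n])"
      by (simp add: tv sg)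
    finally show "prod_list (map (\<lambda>i. u ((Transposition.transpose a b \<circ> p) i)) [0..<n])
        = of_int (sign (Transposition.transpose a b \<circ> p)) * prod_list (map u [0..<n])" .
  qed
qed


lemma sum4: "(\<Sum>j\<in>{1..4::nat}. f j) = f 1 + f 2 + f 3 + f 4"
proof -
  have "{1..4::nat} = {1,2,3,4}" by auto
  then show ?thesis by (simp add: add.assoc)
qed

definition cm :: "'a::ring_1 \<Rightarrow> 'a \<Rightarrow> bool" where "cm y z \<longleftrightarrow> y * z = z * y"
definition acm :: "'a::ring_1 \<Rightarrow> 'a \<Rightarrow> bool" where "acm y z \<longleftrightarrow> y * z = - (z * y)"

lemma cm_sym: "cm y z \<Longrightarrow> cm z y" by (simp add: cm_def)
lemma acm_sym: "acm y z \<Longrightarrow> acm z y" by (simp add: acm_def)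
lemma cm_refl: "cm y y" by (simp add: cm_def)
lemma cm_1: "cm y 1" by (simp add: cm_def)
lemma cm_0: "cm y 0" by (simp add: cm_def)
lemma acm_0: "acm y 0" by (simp add: acm_def)
lemma cm_mult: "cm y a \<Longrightarrow> cm y b \<Longrightarrow> cm y (a * b)"
  by (simp add: cm_def) (metis mult.assoc)
lemma cm_mult_aa: "acm y a \<Longrightarrow> acm y b \<Longrightarrow> cm y (a * b)"
  by (simp add: cm_def acm_def) (metis mult.assoc mult_minus_left mult_minus_right minus_minus)
lemma acm_mult_ca: "cm y a \<Longrightarrow> acm y b \<Longrightarrow> acm y (a * b)"
  by (simp add: cm_def acm_def) (metis mult.assoc mult_minus_left mult_minus_right)
lemma acm_mult_ac: "acm y a \<Longrightarrow> cm y b \<Longrightarrow> acm y (a * b)"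
  by (simp add: cm_def acm_def) (metis mult.assoc mult_minus_left mult_minus_right)
lemma cm_add: "cm y a \<Longrightarrow> cm y b \<Longrightarrow> cm y (a + b)"
  by (simp add: cm_def algebra_simps)
lemma cm_diff: "cm y a \<Longrightarrow> cm y b \<Longrightarrow> cm y (a - b)"
  by (simp add: cm_def algebra_simps)
lemma cm_neg: "cm y a \<Longrightarrow> cm y (- a)"
  by (simp add: cm_def algebra_simps)
lemma acm_add: "acm y a \<Longrightarrow> acm y b \<Longrightarrow> acm y (a + b)"
  by (simp add: acm_def algebra_simps)
lemma acm_diff: "acm y a \<Longrightarrow> acm y b \<Longrightarrow> acm y (a - b)"
  by (simp add: acm_def algebra_simps)
lemma acm_neg: "acm y a \<Longrightarrow> acm y (- a)"
  by (simp add: acm_def algebra_simps)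
lemma cm_sum: "(\<And>j. j \<in> S \<Longrightarrow> cm y (f j)) \<Longrightarrow> cm y (sum f S)"
  by (induction S rule: infinite_finite_induct) (auto intro: cm_add cm_0)
lemma acm_sum: "(\<And>j. j \<in> S \<Longrightarrow> acm y (f j)) \<Longrightarrow> acm y (sum f S)"
  by (induction S rule: infinite_finite_induct) (auto intro: acm_add acm_0)
lemma cm_numeral: "cm y (numeral k)"
  unfolding cm_def using mult_of_nat_commute[of "numeral k" y] by simp

lemma acm_key:
  fixes N X C :: "'a::ring_1"
  assumes "N * X = - (X * N)" "C * X + X * C = 2 * X"
  shows "((1 - C) * N) * X = X * ((1 - C) * N)"
proof -
  have CX: "C * X = 2 * X - X * C" using assms(2) by (simp only: eq_diff_eq)
  have "((1 - C) * N) * X = - ((1 - C) * (X * N))" by (simp only: mult.assoc assms(1) mult_minus_right)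
  also have "\<dots> = - (X * N - (C * X) * N)" by (simp add: algebra_simps)
  also have "\<dots> = X * N - X * C * N" unfolding CX by (simp add: algebra_simps mult_2)
  also have "\<dots> = X * ((1 - C) * N)" by (simp add: algebra_simps)
  finally show ?thesis .
qed

locale chm =
  fixes m1 m2 :: nat and \<kappa> :: "(nat \<Rightarrow> real) \<Rightarrow> complex" and c :: "complex \<Rightarrow> 'a::ring_1"
    and x xi e :: "nat \<Rightarrow> 'a" and g :: "(nat \<Rightarrow> nat \<Rightarrow> real) \<Rightarrow> 'a"
  assumes M: "CH_model m1 m2 \<kappa> c x xi g e"
begin

lemmas MM = M[unfolded CH_model_def]
lemmas c_addP = MM[THEN conjunct1]
lemmas c_multP = MM[THEN conjunct2, THEN conjunct1]
lemmas c_oneP = MM[THEN conjunct2, THEN conjunct2, THEN conjunct1]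
lemmas c_commP = MM[THEN conjunct2, THEN conjunct2, THEN conjunct2, THEN conjunct1]
lemmas xxP = MM[THEN conjunct2, THEN conjunct2, THEN conjunct2, THEN conjunct2, THEN conjunct1]
lemmas xixiP = MM[THEN conjunct2, THEN conjunct2, THEN conjunct2, THEN conjunct2, THEN conjunct2, THEN conjunct1]
lemmas relP = MM[THEN conjunct2, THEN conjunct2, THEN conjunct2, THEN conjunct2, THEN conjunct2, THEN conjunct2, THEN conjunct1]
lemmas g_idP = MM[THEN conjunct2, THEN conjunct2, THEN conjunct2, THEN conjunct2, THEN conjunct2, THEN conjunct2, THEN conjunct2, THEN conjunct1]
lemmas g_mulP = MM[THEN conjunct2, THEN conjunct2, THEN conjunct2, THEN conjunct2, THEN conjunct2, THEN conjunct2, THEN conjunct2, THEN conjunct2, THEN conjunct1]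
lemmas gxP = MM[THEN conjunct2, THEN conjunct2, THEN conjunct2, THEN conjunct2, THEN conjunct2, THEN conjunct2, THEN conjunct2, THEN conjunct2, THEN conjunct2, THEN conjunct1]
lemmas gxiP = MM[THEN conjunct2, THEN conjunct2, THEN conjunct2, THEN conjunct2, THEN conjunct2, THEN conjunct2, THEN conjunct2, THEN conjunct2, THEN conjunct2, THEN conjunct2, THEN conjunct1]
lemmas eeP = MM[THEN conjunct2, THEN conjunct2, THEN conjunct2, THEN conjunct2, THEN conjunct2, THEN conjunct2, THEN conjunct2, THEN conjunct2, THEN conjunct2, THEN conjunct2, THEN conjunct2, THEN conjunct1]
lemmas exP = MM[THEN conjunct2, THEN conjunct2, THEN conjunct2, THEN conjunct2, THEN conjunct2, THEN conjunct2, THEN conjunct2, THEN conjunct2, THEN conjunct2, THEN conjunct2, THEN conjunct2, THEN conjunct2, THEN conjunct1]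
lemmas egP = MM[THEN conjunct2, THEN conjunct2, THEN conjunct2, THEN conjunct2, THEN conjunct2, THEN conjunct2, THEN conjunct2, THEN conjunct2, THEN conjunct2, THEN conjunct2, THEN conjunct2, THEN conjunct2, THEN conjunct2]

lemma c_add: "c (a + b) = c a + c b" using c_addP by blast
lemma c_mult: "c (a * b) = c a * c b" using c_multP by blast
lemma c_one: "c 1 = 1" using c_oneP by blast
lemma c_comm: "c a * y = y * c a" using c_commP by blast
lemma cm_c: "cm y (c a)" by (simp add: cm_def c_comm)
lemma c_zero: "c 0 = 0" using c_add[of 0 0] by simp
lemma c_minus: "c (- a) = - c a" using c_add[of a "-a"] c_zero by (simp add: eq_neg_iff_add_eq_0 add.commute)
lemma c_diff: "c (a - b) = c a - c b" using c_add[of a "-b"] c_minus by simp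
lemma c_of_nat: "c (of_nat n) = of_nat n"
  by (induction n) (simp_all add: c_zero c_add c_one)
lemma c_numeral: "c (numeral k) = numeral k"
  using c_of_nat[of "numeral k"] by simp
lemma c_sum: "c (sum f S) = (\<Sum>j\<in>S. c (f j))"
  by (induction S rule: infinite_finite_induct) (simp_all add: c_zero c_add)
lemma c_half: "c (1/2) * 2 = 1"
proof -
  have "c (1/2) * 2 = c (1/2) * c 2" by (simp add: c_numeral)
  also have "\<dots> = 1" by (simp add: c_mult[symmetric] c_one)
  finally show ?thesis .
qed
lemma cancel2: "2 * (y::'a) = 2 * z \<Longrightarrow> y = z"
proof -
  assume h: "2 * y = 2 * z"
  have "y = c (1/2) * (2 * y)" by (simp add: mult.assoc[symmetric] c_half)
  also have "\<dots> = c (1/2) * (2 * z)" by (simp only: h)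
  also have "\<dots> = z" by (simp add: mult.assoc[symmetric] c_half)
  finally show ?thesis .
qed
lemma acm_c: "acm y z \<Longrightarrow> acm y (c a * z)"
  by (rule acm_mult_ca[OF cm_c])
lemma cm_cm: "cm y z \<Longrightarrow> cm y (c a * z)"
  by (rule cm_mult[OF cm_c])

lemma xx: "j \<in> {1..4} \<Longrightarrow> k \<in> {1..4} \<Longrightarrow> cm (x j) (x k)"
  unfolding cm_def by (rule xxP[rule_format])
lemma xixi: "j \<in> {1..4} \<Longrightarrow> k \<in> {1..4} \<Longrightarrow> cm (xi j) (xi k)"
  unfolding cm_def by (rule xixiP[rule_format])
lemma rel: "j \<in> {1..4} \<Longrightarrow> k \<in> {1..4} \<Longrightarrow> xi j * x k - x k * xi j =
        (if j = k then 1 else 0) +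
        (\<Sum>a\<in>pos_roots m1 m2. c (2 * \<kappa> a / complex_of_real (inner4 a a)
              * complex_of_real (a j) * complex_of_real (a k)) * g (refl_mat a))"
  by (rule relP[rule_format])
lemma ee: "j \<in> {1..4} \<Longrightarrow> k \<in> {1..4} \<Longrightarrow> e j * e k + e k * e j = (if j = k then 2 else 0)"
  by (rule eeP[rule_format])
lemma ex: "j \<in> {1..4} \<Longrightarrow> k \<in> {1..4} \<Longrightarrow> cm (e j) (x k)"
  unfolding cm_def using exP by blast
lemma exi: "j \<in> {1..4} \<Longrightarrow> k \<in> {1..4} \<Longrightarrow> cm (e j) (xi k)"
  unfolding cm_def using exP by blast
lemma eg: "j \<in> {1..4} \<Longrightarrow> w \<in> weyl m1 m2 \<Longrightarrow> cm (e j) (g w)"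
  unfolding cm_def using egP by blast
lemma g_id: "g id4 = 1" by (rule g_idP)
lemma g_mul: "w \<in> weyl m1 m2 \<Longrightarrow> w' \<in> weyl m1 m2 \<Longrightarrow> g (mat_mul w w') = g w * g w'"
  by (rule g_mulP[rule_format])
lemma gx: "w \<in> weyl m1 m2 \<Longrightarrow> j \<in> {1..4} \<Longrightarrow>
        g w * x j = (\<Sum>k\<in>{1..4}. c (complex_of_real (w k j)) * x k) * g w"
  by (rule gxP[rule_format])
lemma gxi: "w \<in> weyl m1 m2 \<Longrightarrow> j \<in> {1..4} \<Longrightarrow>
        g w * xi j = (\<Sum>k\<in>{1..4}. c (complex_of_real (w k j)) * xi k) * g w"
  by (rule gxiP[rule_format])

lemma e_sq: "j \<in> {1..4} \<Longrightarrow> e j * e j = 1"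
proof -
  assume j: "j \<in> {1..4}"
  have "2 * (e j * e j) = 2 * 1" using ee[of j j] j by (simp add: mult_2)
  then show ?thesis by (rule cancel2)
qed
lemma e_anti: "j \<in> {1..4} \<Longrightarrow> k \<in> {1..4} \<Longrightarrow> j \<noteq> k \<Longrightarrow> acm (e j) (e k)"
  using ee[of j k] by (simp add: acm_def eq_neg_iff_add_eq_0)

end


lemma alpha_supp: "j \<noteq> 1 \<Longrightarrow> j \<noteq> 2 \<Longrightarrow> alpha m p j = 0" by (simp add: alpha_def)
lemma beta_supp: "j \<noteq> 3 \<Longrightarrow> j \<noteq> 4 \<Longrightarrow> beta m p j = 0" by (simp add: beta_def)
lemma sc1: "sin t * sin t + cos t * cos t = (1::real)"
  using sin_cos_squared_add[of t] by (simp add: power2_eq_square)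
lemma inner_alpha: "inner4 (alpha m p) (alpha m p) = 1"
  unfolding inner4_def sum4 alpha_def by (simp add: sc1)
lemma inner_beta: "inner4 (beta m p) (beta m p) = 1"
  unfolding inner4_def sum4 beta_def by (simp add: sc1)

lemma roots_cases:
  assumes "a \<in> roots m1 m2"
  shows "inner4 a a = 1 \<and> ((\<forall>j. j \<noteq> 1 \<and> j \<noteq> 2 \<longrightarrow> a j = 0) \<or> (\<forall>j. j \<noteq> 3 \<and> j \<noteq> 4 \<longrightarrow> a j = 0))"
  using assms unfolding roots_def by (auto simp: inner_alpha inner_beta alpha_supp beta_supp)

lemma pos_sub: "pos_roots m1 m2 \<subseteq> roots m1 m2"
  unfolding pos_roots_def roots_def by auto

lemma refl_unit: "inner4 a a = 1 \<Longrightarrow> refl_mat a k j =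
   (if k \<in> {1..4} \<and> j \<in> {1..4} then (if k = j then 1 else 0) - 2 * a k * a j else 0)"
  by (simp add: refl_mat_def)

lemma refl_id4: "mat_mul (refl_mat a) id4 = refl_mat a"
proof (intro ext)
  fix i j
  show "mat_mul (refl_mat a) id4 i j = refl_mat a i j"
  proof (cases "j \<in> {1..4}")
    case True
    have "mat_mul (refl_mat a) id4 i j = (\<Sum>k\<in>{1..4}. if k = j then refl_mat a i k else 0)"
      unfolding mat_mul_def id4_def by (rule sum.cong) (use True in auto)
    also have "\<dots> = refl_mat a i j" using True by simp
    finally show ?thesis .
  next
    case False
    have "mat_mul (refl_mat a) id4 i j = 0" unfolding mat_mul_def id4_def
      by (rule sum.neutral) (use False in auto)
    moreover have "refl_mat a i j = 0" unfolding refl_mat_def by (rule if_not_P) (use False in blast)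
    ultimately show ?thesis by simp
  qed
qed

lemma refl_weyl: "a \<in> roots m1 m2 \<Longrightarrow> refl_mat a \<in> weyl m1 m2"
  using weyl_refl[OF weyl_id, of a m1 m2] by (simp add: refl_id4)

context chm begin

lemma c_lc: "y * (c a * z) = c a * (y * z)"
proof -
  have "y * (c a * z) = (y * c a) * z" by (simp add: mult.assoc)
  also have "\<dots> = (c a * y) * z" by (simp only: c_comm)
  finally show ?thesis by (simp add: mult.assoc)
qed

lemma c_two: "c a * (2 * z) = 2 * (c a * z)"
proof -
  have "c a * (2 * z) = (c a * 2) * z" by (simp add: mult.assoc)
  also have "\<dots> = (2 * c a) * z" by (simp only: c_comm)
  finally show ?thesis by (simp add: mult.assoc)
qed

lemma c_ofreal_delta: "c (complex_of_real (if k = j then 1 else 0)) = (if k = j then 1 else 0)"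
  by (simp add: c_one c_zero)

lemma g_refl_gen:
  fixes y :: "nat \<Rightarrow> 'a"
  assumes a: "a \<in> roots m1 m2"
    and H: "\<And>j. j \<in> {1..4} \<Longrightarrow> g (refl_mat a) * y j = (\<Sum>k\<in>{1..4}. c (complex_of_real (refl_mat a k j)) * y k) * g (refl_mat a)"
    and j: "j \<in> {1..4}"
  shows "g (refl_mat a) * y j = (y j - 2 * (c (complex_of_real (a j)) * (\<Sum>k\<in>{1..4}. c (complex_of_real (a k)) * y k))) * g (refl_mat a)"
proof -
  have in1: "inner4 a a = 1" using roots_cases[OF a] by blast
  have trm: "c (complex_of_real (refl_mat a k j)) * y k =
      (if k = j then y k else 0) - 2 * (c (complex_of_real (a j)) * (c (complex_of_real (a k)) * y k))"
    if k: "k \<in> {1..4}" for k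
  proof -
    have r: "refl_mat a k j = (if k = j then 1 else 0) - 2 * a k * a j"
      using refl_unit[OF in1, of k j] k j by simp
    have e1: "c (complex_of_real (refl_mat a k j)) = (if k = j then 1 else 0) - 2 * (c (complex_of_real (a j)) * c (complex_of_real (a k)))"
    proof -
      have "c (complex_of_real (refl_mat a k j)) = (if k = j then 1 else 0) - c (2 * (complex_of_real (a j) * complex_of_real (a k)))"
        unfolding r by (cases "k = j") (simp_all add: c_diff c_minus c_one c_zero mult_ac)
      also have "c (2 * (complex_of_real (a j) * complex_of_real (a k))) = 2 * (c (complex_of_real (a j)) * c (complex_of_real (a k)))"
        by (simp add: c_mult c_numeral)
      finally show ?thesis .
    qed
    show ?thesis unfolding e1 by (cases "k = j") (simp_all add: algebra_simps)
  qed
  have "(\<Sum>k\<in>{1..4}. c (complex_of_real (refl_mat a k j)) * y k)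
      = (\<Sum>k\<in>{1..4}. (if k = j then y k else 0) - 2 * (c (complex_of_real (a j)) * (c (complex_of_real (a k)) * y k)))"
    by (rule sum.cong) (simp_all add: trm)
  also have "\<dots> = y j - 2 * (c (complex_of_real (a j)) * (\<Sum>k\<in>{1..4}. c (complex_of_real (a k)) * y k))"
    using j by (simp add: sum_subtractf sum_distrib_left)
  finally show ?thesis using H[OF j] by simp
qed

lemma g_anti_gen:
  fixes y :: "nat \<Rightarrow> 'a"
  assumes a: "a \<in> roots m1 m2"
    and H: "\<And>j. j \<in> {1..4} \<Longrightarrow> g (refl_mat a) * y j = (\<Sum>k\<in>{1..4}. c (complex_of_real (refl_mat a k j)) * y k) * g (refl_mat a)"
  shows "g (refl_mat a) * (\<Sum>k\<in>{1..4}. c (complex_of_real (a k)) * y k) = - ((\<Sum>k\<in>{1..4}. c (complex_of_real (a k)) * y k) * g (refl_mat a))"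
proof -
  define ay where "ay = (\<Sum>k\<in>{1..4}. c (complex_of_real (a k)) * y k)"
  define G where "G = g (refl_mat a)"
  have in1: "inner4 a a = 1" using roots_cases[OF a] by blast
  have ss: "(\<Sum>k\<in>{1..4}. c (complex_of_real (a k)) * c (complex_of_real (a k))) = 1"
  proof -
    have "(\<Sum>k\<in>{1..4}. c (complex_of_real (a k)) * c (complex_of_real (a k))) = c (complex_of_real (inner4 a a))"
      unfolding inner4_def by (simp add: c_sum c_mult)
    then show ?thesis using in1 by (simp add: c_one)
  qed
  have "G * ay = (\<Sum>k\<in>{1..4}. c (complex_of_real (a k)) * (G * y k))"
    unfolding ay_def by (simp add: sum_distrib_left c_lc)
  also have "\<dots> = (\<Sum>k\<in>{1..4}. c (complex_of_real (a k)) * ((y k - 2 * (c (complex_of_real (a k)) * ay)) * G))"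
  proof (rule sum.cong)
    fix k :: nat assume k: "k \<in> {1..4}"
    have "G * y k = (y k - 2 * (c (complex_of_real (a k)) * ay)) * G"
      unfolding G_def ay_def by (rule g_refl_gen[OF a H k])
    then show "c (complex_of_real (a k)) * (G * y k) = c (complex_of_real (a k)) * ((y k - 2 * (c (complex_of_real (a k)) * ay)) * G)"
      by simp
  qed simp
  also have "\<dots> = (\<Sum>k\<in>{1..4}. c (complex_of_real (a k)) * y k * G - 2 * ((c (complex_of_real (a k)) * c (complex_of_real (a k))) * (ay * G)))"
  proof (rule sum.cong)
    fix k :: nat
    define ck where "ck = c (complex_of_real (a k))"
    have "ck * ((y k - 2 * (ck * ay)) * G) = ck * y k * G - ck * (2 * (ck * (ay * G)))"
      by (simp add: algebra_simps)
    also have "ck * (2 * (ck * (ay * G))) = 2 * ((ck * ck) * (ay * G))"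
      unfolding ck_def by (simp add: c_two mult.assoc)
    finally show "ck * ((y k - 2 * (ck * ay)) * G) = ck * y k * G - 2 * ((ck * ck) * (ay * G))" .
  qed simp
  also have "\<dots> = ay * G - 2 * (ay * G)"
  proof -
    have s1: "(\<Sum>k\<in>{1..4}. c (complex_of_real (a k)) * y k * G) = ay * G"
      unfolding ay_def by (simp add: sum_distrib_right)
    have s2: "(\<Sum>k\<in>{1..4}. 2 * ((c (complex_of_real (a k)) * c (complex_of_real (a k))) * (ay * G)))
        = 2 * ((\<Sum>k\<in>{1..4}. c (complex_of_real (a k)) * c (complex_of_real (a k))) * (ay * G))"
      by (simp add: sum_distrib_left sum_distrib_right)
    show ?thesis by (simp only: sum_subtractf s1 s2 ss mult_1_left)
  qed
  also have "\<dots> = - (ay * G)" by (simp add: mult_2 algebra_simps)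
  finally show ?thesis unfolding ay_def G_def .
qed

end


lemma swap_mid: "(b::'a::ring_1) * c = c * b \<Longrightarrow> (a * b) * (c * d) = (a * c) * (b * d)"
proof -
  assume h: "b * c = c * b"
  have "(a * b) * (c * d) = a * ((b * c) * d)" by (simp add: mult.assoc)
  also have "\<dots> = a * ((c * b) * d)" by (simp only: h)
  finally show ?thesis by (simp add: mult.assoc)
qed

lemma pos_cases: "a \<in> pos_roots m1 m2 \<Longrightarrow> (\<forall>j. j \<noteq> 1 \<and> j \<noteq> 2 \<longrightarrow> a j = 0) \<or> (\<forall>j. j \<noteq> 3 \<and> j \<noteq> 4 \<longrightarrow> a j = 0)"
  using roots_cases pos_sub by blast

context chm begin

lemma cross: assumes "j \<in> {1..4}" "k \<in> {1..4}" "(j \<le> 2) \<noteq> (k \<le> 2)"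
  shows "cm (xi j) (x k)"
proof -
  have "(\<Sum>a\<in>pos_roots m1 m2. c (2 * \<kappa> a / complex_of_real (inner4 a a)
              * complex_of_real (a j) * complex_of_real (a k)) * g (refl_mat a)) = 0"
  proof (rule sum.neutral, rule ballI)
    fix a assume a: "a \<in> pos_roots m1 m2"
    have "a j = 0 \<or> a k = 0" using pos_cases[OF a] assms by force
    then show "c (2 * \<kappa> a / complex_of_real (inner4 a a)
              * complex_of_real (a j) * complex_of_real (a k)) * g (refl_mat a) = 0"
      by (auto simp: c_zero)
  qed
  moreover have "j \<noteq> k" using assms by auto
  ultimately have "xi j * x k - x k * xi j = 0" using rel[OF assms(1,2)] by simp
  then show ?thesis by (simp add: cm_def)
qed

definition Fk :: "nat \<Rightarrow> (nat \<Rightarrow> real) \<Rightarrow> 'a" where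
  "Fk j a = c (2 * \<kappa> a / complex_of_real (inner4 a a) * complex_of_real (a j))"

lemma rel2: assumes "j \<in> {1..4}" "k \<in> {1..4}"
  shows "xi j * x k - x k * xi j = (if j = k then 1 else 0) +
     (\<Sum>a\<in>pos_roots m1 m2. Fk j a * (c (complex_of_real (a k)) * g (refl_mat a)))"
proof -
  have eq: "c (2 * \<kappa> a / complex_of_real (inner4 a a) * complex_of_real (a j) * complex_of_real (a k)) * g (refl_mat a)
     = Fk j a * (c (complex_of_real (a k)) * g (refl_mat a))" for a
    unfolding Fk_def by (simp only: c_mult mult.assoc)
  show ?thesis using rel[OF assms] by (simp only: eq)
qed

lemma rel3: assumes "j \<in> {1..4}" "k \<in> {1..4}"
  shows "xi k * x j - x j * xi k = (if j = k then 1 else 0) +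
     (\<Sum>a\<in>pos_roots m1 m2. Fk j a * (c (complex_of_real (a k)) * g (refl_mat a)))"
proof -
  have eq: "c (2 * \<kappa> a / complex_of_real (inner4 a a) * complex_of_real (a k) * complex_of_real (a j)) * g (refl_mat a)
     = Fk j a * (c (complex_of_real (a k)) * g (refl_mat a))" for a
  proof -
    have "2 * \<kappa> a / complex_of_real (inner4 a a) * complex_of_real (a k) * complex_of_real (a j)
       = 2 * \<kappa> a / complex_of_real (inner4 a a) * complex_of_real (a j) * complex_of_real (a k)"
      by (simp only: mult_ac)
    then show ?thesis unfolding Fk_def by (simp only: c_mult mult.assoc)
  qed
  have "(if k = j then 1 else 0) = (if j = k then (1::'a) else 0)" by auto
  then show ?thesis using rel[OF assms(2,1)] by (simp only: eq)
qed

lemma G_pair_gen: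
  fixes y :: "nat \<Rightarrow> 'a"
  assumes a: "a \<in> pos_roots m1 m2"
    and H: "\<And>j. j \<in> {1..4} \<Longrightarrow> g (refl_mat a) * y j = (\<Sum>k\<in>{1..4}. c (complex_of_real (refl_mat a k j)) * y k) * g (refl_mat a)"
    and PQ: "(p = 1 \<and> q = 2) \<or> (p = 3 \<and> q = 4)"
  shows "c (complex_of_real (a p)) * (g (refl_mat a) * y p + y p * g (refl_mat a))
       + c (complex_of_real (a q)) * (g (refl_mat a) * y q + y q * g (refl_mat a)) = 0"
proof -
  have ar: "a \<in> roots m1 m2" using a pos_sub by blast
  define G where "G = g (refl_mat a)"
  consider (in_pq) "\<forall>j. j \<noteq> p \<and> j \<noteq> q \<longrightarrow> a j = 0" | (out) "a p = 0" "a q = 0"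
    using pos_cases[OF a] PQ by auto
  then show ?thesis
  proof cases
    case in_pq
    have ay: "(\<Sum>k\<in>{1..4}. c (complex_of_real (a k)) * y k) = c (complex_of_real (a p)) * y p + c (complex_of_real (a q)) * y q"
      using PQ in_pq unfolding sum4 by (auto simp: c_zero)
    have an: "G * (c (complex_of_real (a p)) * y p + c (complex_of_real (a q)) * y q) = - ((c (complex_of_real (a p)) * y p + c (complex_of_real (a q)) * y q) * G)"
      using g_anti_gen[OF ar H] unfolding ay G_def by simp
    have "c (complex_of_real (a p)) * (G * y p + y p * G) + c (complex_of_real (a q)) * (G * y q + y q * G)
        = G * (c (complex_of_real (a p)) * y p + c (complex_of_real (a q)) * y q) + (c (complex_of_real (a p)) * y p + c (complex_of_real (a q)) * y q) * G"
      by (simp add: algebra_simps c_lc mult.assoc)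
    also have "\<dots> = 0" using an by simp
    finally show ?thesis unfolding G_def .
  next
    case out then show ?thesis by (simp add: c_zero)
  qed
qed

lemma G_pair_x: "a \<in> pos_roots m1 m2 \<Longrightarrow> (p = 1 \<and> q = 2) \<or> (p = 3 \<and> q = 4) \<Longrightarrow>
   c (complex_of_real (a p)) * (g (refl_mat a) * x p + x p * g (refl_mat a))
       + c (complex_of_real (a q)) * (g (refl_mat a) * x q + x q * g (refl_mat a)) = 0"
  by (rule G_pair_gen[OF _ gx[OF refl_weyl[OF subsetD[OF pos_sub]]]])

lemma G_pair_xi: "a \<in> pos_roots m1 m2 \<Longrightarrow> (p = 1 \<and> q = 2) \<or> (p = 3 \<and> q = 4) \<Longrightarrow>
   c (complex_of_real (a p)) * (g (refl_mat a) * xi p + xi p * g (refl_mat a))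
       + c (complex_of_real (a q)) * (g (refl_mat a) * xi q + xi q * g (refl_mat a)) = 0"
  by (rule G_pair_gen[OF _ gxi[OF refl_weyl[OF subsetD[OF pos_sub]]]])

end


context chm begin

lemma PQ_facts: "(p = 1 \<and> q = 2) \<or> (p = 3 \<and> q = 4) \<Longrightarrow> p \<in> {1..4::nat} \<and> q \<in> {1..4::nat} \<and> p \<noteq> q"
  by auto

lemma term_gen: "(X::'a) * F = F * X \<Longrightarrow> X * C = C * X \<Longrightarrow>
   F * (C * G) * X + X * (F * (C * G)) = F * (C * (G * X + X * G))"
proof -
  assume f: "X * F = F * X" and cc: "X * C = C * X"
  have "X * (F * (C * G)) = (X * F) * (C * G)" by (simp add: mult.assoc)
  also have "\<dots> = F * ((X * C) * G)" by (simp add: f mult.assoc)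
  also have "\<dots> = F * (C * (X * G))" by (simp add: cc mult.assoc)
  finally have "X * (F * (C * G)) = F * (C * (X * G))" .
  then show ?thesis by (simp add: distrib_left mult.assoc)
qed

lemma dunkl_R:
  assumes PQ: "(p = 1 \<and> q = 2) \<or> (p = 3 \<and> q = 4)" and j: "j = p \<or> j = q"
  shows "xi j * (x p * x p + x q * x q) - (x p * x p + x q * x q) * xi j = 2 * x j"
proof -
  have pq: "p \<in> {1..4}" "q \<in> {1..4}" "p \<noteq> q" using PQ_facts[OF PQ] by auto
  have jr: "j \<in> {1..4}" using j pq by auto
  define S where "S k = (\<Sum>a\<in>pos_roots m1 m2. Fk j a * (c (complex_of_real (a k)) * g (refl_mat a)))" for k
  define W where "W k = (\<Sum>a\<in>pos_roots m1 m2. Fk j a * (c (complex_of_real (a k)) * (g (refl_mat a) * x k + x k * g (refl_mat a))))" for k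
  have step: "xi j * (x k * x k) - (x k * x k) * xi j = 2 * ((if j = k then 1 else 0) * x k) + W k"
    if k: "k \<in> {1..4}" for k
  proof -
    define T where "T = xi j * x k - x k * xi j"
    have T: "T = (if j = k then 1 else 0) + S k" unfolding T_def S_def by (rule rel2[OF jr k])
    have "xi j * (x k * x k) - (x k * x k) * xi j = T * x k + x k * T"
      unfolding T_def by (simp add: algebra_simps)
    also have "\<dots> = 2 * ((if j = k then 1 else 0) * x k) + (S k * x k + x k * S k)"
      unfolding T by (simp add: algebra_simps mult_2)
    also have "S k * x k + x k * S k = W k"
    proof -
      have "S k * x k + x k * S k = (\<Sum>a\<in>pos_roots m1 m2. Fk j a * (c (complex_of_real (a k)) * g (refl_mat a)) * x k + x k * (Fk j a * (c (complex_of_real (a k)) * g (refl_mat a))))"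
        unfolding S_def by (simp add: sum_distrib_right sum_distrib_left sum.distrib)
      also have "\<dots> = W k" unfolding W_def
        by (rule sum.cong[OF refl], rule term_gen) (simp_all only: Fk_def c_comm)
      finally show ?thesis .
    qed
    finally show ?thesis .
  qed
  have "xi j * (x p * x p + x q * x q) - (x p * x p + x q * x q) * xi j
      = (xi j * (x p * x p) - (x p * x p) * xi j) + (xi j * (x q * x q) - (x q * x q) * xi j)"
    by (simp add: algebra_simps)
  also have "\<dots> = (2 * ((if j = p then 1 else 0) * x p) + 2 * ((if j = q then 1 else 0) * x q)) + (W p + W q)"
    using step[OF pq(1)] step[OF pq(2)] by (simp add: algebra_simps)
  also have "W p + W q = 0"
  proof -
    have "W p + W q = (\<Sum>a\<in>pos_roots m1 m2. Fk j a * (c (complex_of_real (a p)) * (g (refl_mat a) * x p + x p * g (refl_mat a))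
       + c (complex_of_real (a q)) * (g (refl_mat a) * x q + x q * g (refl_mat a))))"
      unfolding W_def by (simp add: sum.distrib[symmetric] distrib_left)
    also have "\<dots> = 0" by (rule sum.neutral) (simp add: G_pair_x[OF _ PQ])
    finally show ?thesis .
  qed
  also have "2 * ((if j = p then 1 else 0) * x p) + 2 * ((if j = q then 1 else 0) * x q) = 2 * x j"
    using j pq(3) by auto
  finally show ?thesis by simp
qed

lemma dunkl_D:
  assumes PQ: "(p = 1 \<and> q = 2) \<or> (p = 3 \<and> q = 4)" and j: "j = p \<or> j = q"
  shows "(xi p * xi p + xi q * xi q) * x j - x j * (xi p * xi p + xi q * xi q) = 2 * xi j"
proof -
  have pq: "p \<in> {1..4}" "q \<in> {1..4}" "p \<noteq> q" using PQ_facts[OF PQ] by auto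
  have jr: "j \<in> {1..4}" using j pq by auto
  define S where "S k = (\<Sum>a\<in>pos_roots m1 m2. Fk j a * (c (complex_of_real (a k)) * g (refl_mat a)))" for k
  define W where "W k = (\<Sum>a\<in>pos_roots m1 m2. Fk j a * (c (complex_of_real (a k)) * (g (refl_mat a) * xi k + xi k * g (refl_mat a))))" for k
  have step: "(xi k * xi k) * x j - x j * (xi k * xi k) = 2 * ((if j = k then 1 else 0) * xi k) + W k"
    if k: "k \<in> {1..4}" for k
  proof -
    define T where "T = xi k * x j - x j * xi k"
    have T: "T = (if j = k then 1 else 0) + S k" unfolding T_def S_def by (rule rel3[OF jr k])
    have "(xi k * xi k) * x j - x j * (xi k * xi k) = xi k * T + T * xi k"
      unfolding T_def by (simp add: algebra_simps)
    also have "\<dots> = 2 * ((if j = k then 1 else 0) * xi k) + (S k * xi k + xi k * S k)"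
      unfolding T by (simp add: algebra_simps mult_2)
    also have "S k * xi k + xi k * S k = W k"
    proof -
      have "S k * xi k + xi k * S k = (\<Sum>a\<in>pos_roots m1 m2. Fk j a * (c (complex_of_real (a k)) * g (refl_mat a)) * xi k + xi k * (Fk j a * (c (complex_of_real (a k)) * g (refl_mat a))))"
        unfolding S_def by (simp add: sum_distrib_right sum_distrib_left sum.distrib)
      also have "\<dots> = W k" unfolding W_def
        by (rule sum.cong[OF refl], rule term_gen) (simp_all only: Fk_def c_comm)
      finally show ?thesis .
    qed
    finally show ?thesis .
  qed
  have "(xi p * xi p + xi q * xi q) * x j - x j * (xi p * xi p + xi q * xi q)
      = ((xi p * xi p) * x j - x j * (xi p * xi p)) + ((xi q * xi q) * x j - x j * (xi q * xi q))"
    by (simp add: algebra_simps)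
  also have "\<dots> = (2 * ((if j = p then 1 else 0) * xi p) + 2 * ((if j = q then 1 else 0) * xi q)) + (W p + W q)"
    using step[OF pq(1)] step[OF pq(2)] by (simp add: algebra_simps)
  also have "W p + W q = 0"
  proof -
    have "W p + W q = (\<Sum>a\<in>pos_roots m1 m2. Fk j a * (c (complex_of_real (a p)) * (g (refl_mat a) * xi p + xi p * g (refl_mat a))
       + c (complex_of_real (a q)) * (g (refl_mat a) * xi q + xi q * g (refl_mat a))))"
      unfolding W_def by (simp add: sum.distrib[symmetric] distrib_left)
    also have "\<dots> = 0" by (rule sum.neutral) (simp add: G_pair_xi[OF _ PQ])
    finally show ?thesis .
  qed
  also have "2 * ((if j = p then 1 else 0) * xi p) + 2 * ((if j = q then 1 else 0) * xi q) = 2 * xi j"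
    using j pq(3) by auto
  finally show ?thesis by simp
qed

end


definition sp :: "bool \<Rightarrow> 'a::ring_1 \<Rightarrow> 'a \<Rightarrow> bool" where
  "sp b y z \<longleftrightarrow> y * z = (if b then - (z * y) else z * y)"

lemma sp_cm: "cm y z \<Longrightarrow> sp False y z" by (simp add: sp_def cm_def)
lemma sp_acm: "acm y z \<Longrightarrow> sp True y z" by (simp add: sp_def acm_def)
lemma sp_cmS: "cm z y \<Longrightarrow> sp False y z" by (simp add: sp_def cm_def)
lemma sp_acmS: "acm z y \<Longrightarrow> sp True y z" by (simp add: sp_def acm_def)
lemma cm_sp: "sp False y z \<Longrightarrow> cm y z" by (simp add: sp_def cm_def)
lemma acm_sp: "sp True y z \<Longrightarrow> acm y z" by (simp add: sp_def acm_def)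
lemma sp_sym: "sp b y z \<Longrightarrow> sp b z y" by (cases b) (auto simp: sp_def)

definition xeq :: "bool \<Rightarrow> bool \<Rightarrow> bool \<Rightarrow> bool" where "xeq b b1 b2 \<longleftrightarrow> b = (b1 \<noteq> b2)"
definition beq :: "bool \<Rightarrow> bool \<Rightarrow> bool" where "beq b b1 \<longleftrightarrow> b = b1"
lemma xeq_FFF: "xeq False False False" by (simp add: xeq_def)
lemma xeq_TFT: "xeq True False True" by (simp add: xeq_def)
lemma xeq_TTF: "xeq True True False" by (simp add: xeq_def)
lemma xeq_FTT: "xeq False True True" by (simp add: xeq_def)
lemma beq_refl: "beq b b" by (simp add: beq_def)
lemmas bools = xeq_FFF xeq_TFT xeq_TTF xeq_FTT beq_refl

lemma spR_mult: "sp b1 y a \<Longrightarrow> sp b2 y c \<Longrightarrow> xeq b b1 b2 \<Longrightarrow> sp b y (a * c)"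
  unfolding sp_def xeq_def by (cases b1; cases b2) (auto simp: mult.assoc[symmetric], auto simp: mult.assoc)
lemma spL_mult: "sp b1 a y \<Longrightarrow> sp b2 c y \<Longrightarrow> xeq b b1 b2 \<Longrightarrow> sp b (a * c) y"
  by (rule sp_sym, rule spR_mult[OF sp_sym sp_sym])
lemma spR_add: "sp b1 y a \<Longrightarrow> sp b2 y c \<Longrightarrow> beq b b1 \<Longrightarrow> beq b b2 \<Longrightarrow> sp b y (a + c)"
  unfolding sp_def beq_def by (cases b) (auto simp: algebra_simps)
lemma spL_add: "sp b1 a y \<Longrightarrow> sp b2 c y \<Longrightarrow> beq b b1 \<Longrightarrow> beq b b2 \<Longrightarrow> sp b (a + c) y"
  by (rule sp_sym, rule spR_add[OF sp_sym sp_sym])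
lemma spR_diff: "sp b1 y a \<Longrightarrow> sp b2 y c \<Longrightarrow> beq b b1 \<Longrightarrow> beq b b2 \<Longrightarrow> sp b y (a - c)"
  unfolding sp_def beq_def by (cases b) (auto simp: algebra_simps)
lemma spL_diff: "sp b1 a y \<Longrightarrow> sp b2 c y \<Longrightarrow> beq b b1 \<Longrightarrow> beq b b2 \<Longrightarrow> sp b (a - c) y"
  by (rule sp_sym, rule spR_diff[OF sp_sym sp_sym])
lemma spR_neg: "sp b y a \<Longrightarrow> sp b y (- a)"
  unfolding sp_def by (cases b) auto
lemma spL_neg: "sp b a y \<Longrightarrow> sp b (- a) y"
  by (rule sp_sym, rule spR_neg[OF sp_sym])
lemma spR_one: "sp False y 1" by (simp add: sp_def)
lemma spL_one: "sp False 1 y" by (simp add: sp_def)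
lemma spR_num: "sp False y (numeral k)" by (rule sp_cm, rule cm_numeral)
lemma spL_num: "sp False (numeral k) y" by (rule sp_cmS, rule cm_numeral)
lemma spR_sum: "(\<And>j. j \<in> S \<Longrightarrow> sp b y (f j)) \<Longrightarrow> sp b y (sum f S)"
  unfolding sp_def by (cases b) (auto intro: cm_sum[unfolded cm_def] acm_sum[unfolded acm_def])
lemma spL_sum: "(\<And>j. j \<in> S \<Longrightarrow> sp b (f j) y) \<Longrightarrow> sp b (sum f S) y"
  by (rule sp_sym, rule spR_sum, rule sp_sym) auto

lemmas spR = bools spR_mult spR_add spR_diff spR_neg spR_one spR_num spR_sum
lemmas spL = spL_mult spL_add spL_diff spL_neg spL_one spL_num spL_sum

context chm begin

lemma spR_c: "sp False y (c a)" using cm_c by (simp add: sp_def cm_def)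
lemma spL_c: "sp False (c a) y" using cm_c by (simp add: sp_def cm_def)

lemma at_xx_1_1: "sp False (x 1) (x 1)" by (rule sp_cm, rule xx) simp_all
lemma at_xixi_1_1: "sp False (xi 1) (xi 1)" by (rule sp_cm, rule xixi) simp_all
lemma at_ex_1_1: "sp False (e 1) (x 1)" by (rule sp_cm, rule ex) simp_all
lemma at_xe_1_1: "sp False (x 1) (e 1)" by (rule sp_cmS, rule ex) simp_all
lemma at_exi_1_1: "sp False (e 1) (xi 1)" by (rule sp_cm, rule exi) simp_all
lemma at_xie_1_1: "sp False (xi 1) (e 1)" by (rule sp_cmS, rule exi) simp_all
lemma at_ee_1_1: "sp False (e 1) (e 1)" by (rule sp_cm, rule cm_refl)
lemma at_xx_1_2: "sp False (x 1) (x 2)" by (rule sp_cm, rule xx) simp_all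
lemma at_xixi_1_2: "sp False (xi 1) (xi 2)" by (rule sp_cm, rule xixi) simp_all
lemma at_ex_1_2: "sp False (e 1) (x 2)" by (rule sp_cm, rule ex) simp_all
lemma at_xe_1_2: "sp False (x 2) (e 1)" by (rule sp_cmS, rule ex) simp_all
lemma at_exi_1_2: "sp False (e 1) (xi 2)" by (rule sp_cm, rule exi) simp_all
lemma at_xie_1_2: "sp False (xi 2) (e 1)" by (rule sp_cmS, rule exi) simp_all
lemma at_ee_1_2: "sp True (e 1) (e 2)" by (rule sp_acm, rule e_anti) simp_all
lemma at_xx_1_3: "sp False (x 1) (x 3)" by (rule sp_cm, rule xx) simp_all
lemma at_xixi_1_3: "sp False (xi 1) (xi 3)" by (rule sp_cm, rule xixi) simp_all
lemma at_ex_1_3: "sp False (e 1) (x 3)" by (rule sp_cm, rule ex) simp_all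
lemma at_xe_1_3: "sp False (x 3) (e 1)" by (rule sp_cmS, rule ex) simp_all
lemma at_exi_1_3: "sp False (e 1) (xi 3)" by (rule sp_cm, rule exi) simp_all
lemma at_xie_1_3: "sp False (xi 3) (e 1)" by (rule sp_cmS, rule exi) simp_all
lemma at_xix_1_3: "sp False (xi 1) (x 3)" by (rule sp_cm, rule cross) simp_all
lemma at_xxi_1_3: "sp False (x 3) (xi 1)" by (rule sp_cmS, rule cross) simp_all
lemma at_ee_1_3: "sp True (e 1) (e 3)" by (rule sp_acm, rule e_anti) simp_all
lemma at_xx_1_4: "sp False (x 1) (x 4)" by (rule sp_cm, rule xx) simp_all
lemma at_xixi_1_4: "sp False (xi 1) (xi 4)" by (rule sp_cm, rule xixi) simp_all
lemma at_ex_1_4: "sp False (e 1) (x 4)" by (rule sp_cm, rule ex) simp_all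
lemma at_xe_1_4: "sp False (x 4) (e 1)" by (rule sp_cmS, rule ex) simp_all
lemma at_exi_1_4: "sp False (e 1) (xi 4)" by (rule sp_cm, rule exi) simp_all
lemma at_xie_1_4: "sp False (xi 4) (e 1)" by (rule sp_cmS, rule exi) simp_all
lemma at_xix_1_4: "sp False (xi 1) (x 4)" by (rule sp_cm, rule cross) simp_all
lemma at_xxi_1_4: "sp False (x 4) (xi 1)" by (rule sp_cmS, rule cross) simp_all
lemma at_ee_1_4: "sp True (e 1) (e 4)" by (rule sp_acm, rule e_anti) simp_all
lemma at_xx_2_1: "sp False (x 2) (x 1)" by (rule sp_cm, rule xx) simp_all
lemma at_xixi_2_1: "sp False (xi 2) (xi 1)" by (rule sp_cm, rule xixi) simp_all
lemma at_ex_2_1: "sp False (e 2) (x 1)" by (rule sp_cm, rule ex) simp_all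
lemma at_xe_2_1: "sp False (x 1) (e 2)" by (rule sp_cmS, rule ex) simp_all
lemma at_exi_2_1: "sp False (e 2) (xi 1)" by (rule sp_cm, rule exi) simp_all
lemma at_xie_2_1: "sp False (xi 1) (e 2)" by (rule sp_cmS, rule exi) simp_all
lemma at_ee_2_1: "sp True (e 2) (e 1)" by (rule sp_acm, rule e_anti) simp_all
lemma at_xx_2_2: "sp False (x 2) (x 2)" by (rule sp_cm, rule xx) simp_all
lemma at_xixi_2_2: "sp False (xi 2) (xi 2)" by (rule sp_cm, rule xixi) simp_all
lemma at_ex_2_2: "sp False (e 2) (x 2)" by (rule sp_cm, rule ex) simp_all
lemma at_xe_2_2: "sp False (x 2) (e 2)" by (rule sp_cmS, rule ex) simp_all
lemma at_exi_2_2: "sp False (e 2) (xi 2)" by (rule sp_cm, rule exi) simp_all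
lemma at_xie_2_2: "sp False (xi 2) (e 2)" by (rule sp_cmS, rule exi) simp_all
lemma at_ee_2_2: "sp False (e 2) (e 2)" by (rule sp_cm, rule cm_refl)
lemma at_xx_2_3: "sp False (x 2) (x 3)" by (rule sp_cm, rule xx) simp_all
lemma at_xixi_2_3: "sp False (xi 2) (xi 3)" by (rule sp_cm, rule xixi) simp_all
lemma at_ex_2_3: "sp False (e 2) (x 3)" by (rule sp_cm, rule ex) simp_all
lemma at_xe_2_3: "sp False (x 3) (e 2)" by (rule sp_cmS, rule ex) simp_all
lemma at_exi_2_3: "sp False (e 2) (xi 3)" by (rule sp_cm, rule exi) simp_all
lemma at_xie_2_3: "sp False (xi 3) (e 2)" by (rule sp_cmS, rule exi) simp_all
lemma at_xix_2_3: "sp False (xi 2) (x 3)" by (rule sp_cm, rule cross) simp_all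
lemma at_xxi_2_3: "sp False (x 3) (xi 2)" by (rule sp_cmS, rule cross) simp_all
lemma at_ee_2_3: "sp True (e 2) (e 3)" by (rule sp_acm, rule e_anti) simp_all
lemma at_xx_2_4: "sp False (x 2) (x 4)" by (rule sp_cm, rule xx) simp_all
lemma at_xixi_2_4: "sp False (xi 2) (xi 4)" by (rule sp_cm, rule xixi) simp_all
lemma at_ex_2_4: "sp False (e 2) (x 4)" by (rule sp_cm, rule ex) simp_all
lemma at_xe_2_4: "sp False (x 4) (e 2)" by (rule sp_cmS, rule ex) simp_all
lemma at_exi_2_4: "sp False (e 2) (xi 4)" by (rule sp_cm, rule exi) simp_all
lemma at_xie_2_4: "sp False (xi 4) (e 2)" by (rule sp_cmS, rule exi) simp_all
lemma at_xix_2_4: "sp False (xi 2) (x 4)" by (rule sp_cm, rule cross) simp_all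
lemma at_xxi_2_4: "sp False (x 4) (xi 2)" by (rule sp_cmS, rule cross) simp_all
lemma at_ee_2_4: "sp True (e 2) (e 4)" by (rule sp_acm, rule e_anti) simp_all
lemma at_xx_3_1: "sp False (x 3) (x 1)" by (rule sp_cm, rule xx) simp_all
lemma at_xixi_3_1: "sp False (xi 3) (xi 1)" by (rule sp_cm, rule xixi) simp_all
lemma at_ex_3_1: "sp False (e 3) (x 1)" by (rule sp_cm, rule ex) simp_all
lemma at_xe_3_1: "sp False (x 1) (e 3)" by (rule sp_cmS, rule ex) simp_all
lemma at_exi_3_1: "sp False (e 3) (xi 1)" by (rule sp_cm, rule exi) simp_all
lemma at_xie_3_1: "sp False (xi 1) (e 3)" by (rule sp_cmS, rule exi) simp_all
lemma at_xix_3_1: "sp False (xi 3) (x 1)" by (rule sp_cm, rule cross) simp_all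
lemma at_xxi_3_1: "sp False (x 1) (xi 3)" by (rule sp_cmS, rule cross) simp_all
lemma at_ee_3_1: "sp True (e 3) (e 1)" by (rule sp_acm, rule e_anti) simp_all
lemma at_xx_3_2: "sp False (x 3) (x 2)" by (rule sp_cm, rule xx) simp_all
lemma at_xixi_3_2: "sp False (xi 3) (xi 2)" by (rule sp_cm, rule xixi) simp_all
lemma at_ex_3_2: "sp False (e 3) (x 2)" by (rule sp_cm, rule ex) simp_all
lemma at_xe_3_2: "sp False (x 2) (e 3)" by (rule sp_cmS, rule ex) simp_all
lemma at_exi_3_2: "sp False (e 3) (xi 2)" by (rule sp_cm, rule exi) simp_all
lemma at_xie_3_2: "sp False (xi 2) (e 3)" by (rule sp_cmS, rule exi) simp_all
lemma at_xix_3_2: "sp False (xi 3) (x 2)" by (rule sp_cm, rule cross) simp_all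
lemma at_xxi_3_2: "sp False (x 2) (xi 3)" by (rule sp_cmS, rule cross) simp_all
lemma at_ee_3_2: "sp True (e 3) (e 2)" by (rule sp_acm, rule e_anti) simp_all
lemma at_xx_3_3: "sp False (x 3) (x 3)" by (rule sp_cm, rule xx) simp_all
lemma at_xixi_3_3: "sp False (xi 3) (xi 3)" by (rule sp_cm, rule xixi) simp_all
lemma at_ex_3_3: "sp False (e 3) (x 3)" by (rule sp_cm, rule ex) simp_all
lemma at_xe_3_3: "sp False (x 3) (e 3)" by (rule sp_cmS, rule ex) simp_all
lemma at_exi_3_3: "sp False (e 3) (xi 3)" by (rule sp_cm, rule exi) simp_all
lemma at_xie_3_3: "sp False (xi 3) (e 3)" by (rule sp_cmS, rule exi) simp_all
lemma at_ee_3_3: "sp False (e 3) (e 3)" by (rule sp_cm, rule cm_refl)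
lemma at_xx_3_4: "sp False (x 3) (x 4)" by (rule sp_cm, rule xx) simp_all
lemma at_xixi_3_4: "sp False (xi 3) (xi 4)" by (rule sp_cm, rule xixi) simp_all
lemma at_ex_3_4: "sp False (e 3) (x 4)" by (rule sp_cm, rule ex) simp_all
lemma at_xe_3_4: "sp False (x 4) (e 3)" by (rule sp_cmS, rule ex) simp_all
lemma at_exi_3_4: "sp False (e 3) (xi 4)" by (rule sp_cm, rule exi) simp_all
lemma at_xie_3_4: "sp False (xi 4) (e 3)" by (rule sp_cmS, rule exi) simp_all
lemma at_ee_3_4: "sp True (e 3) (e 4)" by (rule sp_acm, rule e_anti) simp_all
lemma at_xx_4_1: "sp False (x 4) (x 1)" by (rule sp_cm, rule xx) simp_all
lemma at_xixi_4_1: "sp False (xi 4) (xi 1)" by (rule sp_cm, rule xixi) simp_all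
lemma at_ex_4_1: "sp False (e 4) (x 1)" by (rule sp_cm, rule ex) simp_all
lemma at_xe_4_1: "sp False (x 1) (e 4)" by (rule sp_cmS, rule ex) simp_all
lemma at_exi_4_1: "sp False (e 4) (xi 1)" by (rule sp_cm, rule exi) simp_all
lemma at_xie_4_1: "sp False (xi 1) (e 4)" by (rule sp_cmS, rule exi) simp_all
lemma at_xix_4_1: "sp False (xi 4) (x 1)" by (rule sp_cm, rule cross) simp_all
lemma at_xxi_4_1: "sp False (x 1) (xi 4)" by (rule sp_cmS, rule cross) simp_all
lemma at_ee_4_1: "sp True (e 4) (e 1)" by (rule sp_acm, rule e_anti) simp_all
lemma at_xx_4_2: "sp False (x 4) (x 2)" by (rule sp_cm, rule xx) simp_all
lemma at_xixi_4_2: "sp False (xi 4) (xi 2)" by (rule sp_cm, rule xixi) simp_all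
lemma at_ex_4_2: "sp False (e 4) (x 2)" by (rule sp_cm, rule ex) simp_all
lemma at_xe_4_2: "sp False (x 2) (e 4)" by (rule sp_cmS, rule ex) simp_all
lemma at_exi_4_2: "sp False (e 4) (xi 2)" by (rule sp_cm, rule exi) simp_all
lemma at_xie_4_2: "sp False (xi 2) (e 4)" by (rule sp_cmS, rule exi) simp_all
lemma at_xix_4_2: "sp False (xi 4) (x 2)" by (rule sp_cm, rule cross) simp_all
lemma at_xxi_4_2: "sp False (x 2) (xi 4)" by (rule sp_cmS, rule cross) simp_all
lemma at_ee_4_2: "sp True (e 4) (e 2)" by (rule sp_acm, rule e_anti) simp_all
lemma at_xx_4_3: "sp False (x 4) (x 3)" by (rule sp_cm, rule xx) simp_all
lemma at_xixi_4_3: "sp False (xi 4) (xi 3)" by (rule sp_cm, rule xixi) simp_all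
lemma at_ex_4_3: "sp False (e 4) (x 3)" by (rule sp_cm, rule ex) simp_all
lemma at_xe_4_3: "sp False (x 3) (e 4)" by (rule sp_cmS, rule ex) simp_all
lemma at_exi_4_3: "sp False (e 4) (xi 3)" by (rule sp_cm, rule exi) simp_all
lemma at_xie_4_3: "sp False (xi 3) (e 4)" by (rule sp_cmS, rule exi) simp_all
lemma at_ee_4_3: "sp True (e 4) (e 3)" by (rule sp_acm, rule e_anti) simp_all
lemma at_xx_4_4: "sp False (x 4) (x 4)" by (rule sp_cm, rule xx) simp_all
lemma at_xixi_4_4: "sp False (xi 4) (xi 4)" by (rule sp_cm, rule xixi) simp_all
lemma at_ex_4_4: "sp False (e 4) (x 4)" by (rule sp_cm, rule ex) simp_all
lemma at_xe_4_4: "sp False (x 4) (e 4)" by (rule sp_cmS, rule ex) simp_all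
lemma at_exi_4_4: "sp False (e 4) (xi 4)" by (rule sp_cm, rule exi) simp_all
lemma at_xie_4_4: "sp False (xi 4) (e 4)" by (rule sp_cmS, rule exi) simp_all
lemma at_ee_4_4: "sp False (e 4) (e 4)" by (rule sp_cm, rule cm_refl)

lemmas atoms = at_xx_1_1 at_xixi_1_1 at_ex_1_1 at_xe_1_1 at_exi_1_1 at_xie_1_1 at_ee_1_1 at_xx_1_2 at_xixi_1_2 at_ex_1_2 at_xe_1_2 at_exi_1_2 at_xie_1_2 at_ee_1_2 at_xx_1_3 at_xixi_1_3 at_ex_1_3 at_xe_1_3 at_exi_1_3 at_xie_1_3 at_xix_1_3 at_xxi_1_3 at_ee_1_3 at_xx_1_4 at_xixi_1_4 at_ex_1_4 at_xe_1_4 at_exi_1_4 at_xie_1_4 at_xix_1_4 at_xxi_1_4 at_ee_1_4 at_xx_2_1 at_xixi_2_1 at_ex_2_1 at_xe_2_1 at_exi_2_1 at_xie_2_1 at_ee_2_1 at_xx_2_2 at_xixi_2_2 at_ex_2_2 at_xe_2_2 at_exi_2_2 at_xie_2_2 at_ee_2_2 at_xx_2_3 at_xixi_2_3 at_ex_2_3 at_xe_2_3 at_exi_2_3 at_xie_2_3 at_xix_2_3 at_xxi_2_3 at_ee_2_3 at_xx_2_4 at_xixi_2_4 at_ex_2_4 at_xe_2_4 at_exi_2_4 at_xie_2_4 at_xix_2_4 at_xxi_2_4 at_ee_2_4 at_xx_3_1 at_xixi_3_1 at_ex_3_1 at_xe_3_1 at_exi_3_1 at_xie_3_1 at_xix_3_1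 at_xxi_3_1 at_ee_3_1 at_xx_3_2 at_xixi_3_2 at_ex_3_2 at_xe_3_2 at_exi_3_2 at_xie_3_2 at_xix_3_2 at_xxi_3_2 at_ee_3_2 at_xx_3_3 at_xixi_3_3 at_ex_3_3 at_xe_3_3 at_exi_3_3 at_xie_3_3 at_ee_3_3 at_xx_3_4 at_xixi_3_4 at_ex_3_4 at_xe_3_4 at_exi_3_4 at_xie_3_4 at_ee_3_4 at_xx_4_1 at_xixi_4_1 at_ex_4_1 at_xe_4_1 at_exi_4_1 at_xie_4_1 at_xix_4_1 at_xxi_4_1 at_ee_4_1 at_xx_4_2 at_xixi_4_2 at_ex_4_2 at_xe_4_2 at_exi_4_2 at_xie_4_2 at_xix_4_2 at_xxi_4_2 at_ee_4_2 at_xx_4_3 at_xixi_4_3 at_ex_4_3 at_xe_4_3 at_exi_4_3 at_xie_4_3 at_ee_4_3 at_xx_4_4 at_xixi_4_4 at_ex_4_4 at_xe_4_4 at_exi_4_4 at_xie_4_4 at_ee_4_4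

definition XI where "XI p q = x p * e p + x q * e q"
definition DI where "DI p q = xi p * e p + xi q * e q"
definition NN where "NN p q = e p * e q"
definition CI where "CI p q = DI p q * XI p q - XI p q * DI p q"
definition MI where "MI p q = (1 - CI p q) * NN p q"
definition EE where "EE = e 1 * e 2 * e 3 * e 4"


end


context chm begin

lemma XI_sq: assumes PQ: "(p = 1 \<and> q = 2) \<or> (p = 3 \<and> q = 4)"
  shows "XI p q * XI p q = x p * x p + x q * x q"
proof -
  have pq: "p \<in> {1..4}" "q \<in> {1..4}" "p \<noteq> q" using PQ_facts[OF PQ] by auto
  have sw: "(x i * e i) * (x k * e k) = (x i * x k) * (e i * e k)" if "i \<in> {1..4}" "k \<in> {1..4}" for i k
    by (rule swap_mid) (use ex[OF that] in \<open>simp add: cm_def\<close>)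
  have xqp: "x q * x p = x p * x q" using xx[OF pq(2,1)] by (simp add: cm_def)
  have eqp: "e q * e p = - (e p * e q)" using e_anti[OF pq(2,1)] pq(3) by (simp add: acm_def)
  have "XI p q * XI p q = (x p * e p) * (x p * e p) + (x p * e p) * (x q * e q) + ((x q * e q) * (x p * e p) + (x q * e q) * (x q * e q))"
    unfolding XI_def by (simp add: distrib_left distrib_right add.assoc)
  also have "\<dots> = (x p * x p) * (e p * e p) + (x p * x q) * (e p * e q) + ((x q * x p) * (e q * e p) + (x q * x q) * (e q * e q))"
    using pq by (simp add: sw)
  also have "\<dots> = x p * x p + x q * x q"
    using pq by (simp add: e_sq xqp eqp)
  finally show ?thesis .
qed

lemma DI_sq: assumes PQ: "(p = 1 \<and> q = 2) \<or> (p = 3 \<and> q = 4)"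
  shows "DI p q * DI p q = xi p * xi p + xi q * xi q"
proof -
  have pq: "p \<in> {1..4}" "q \<in> {1..4}" "p \<noteq> q" using PQ_facts[OF PQ] by auto
  have sw: "(xi i * e i) * (xi k * e k) = (xi i * xi k) * (e i * e k)" if "i \<in> {1..4}" "k \<in> {1..4}" for i k
    by (rule swap_mid) (use exi[OF that] in \<open>simp add: cm_def\<close>)
  have xqp: "xi q * xi p = xi p * xi q" using xixi[OF pq(2,1)] by (simp add: cm_def)
  have eqp: "e q * e p = - (e p * e q)" using e_anti[OF pq(2,1)] pq(3) by (simp add: acm_def)
  have "DI p q * DI p q = (xi p * e p) * (xi p * e p) + (xi p * e p) * (xi q * e q) + ((xi q * e q) * (xi p * e p) + (xi q * e q) * (xi q * e q))"
    unfolding DI_def by (simp add: distrib_left distrib_right add.assoc)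
  also have "\<dots> = (xi p * xi p) * (e p * e p) + (xi p * xi q) * (e p * e q) + ((xi q * xi p) * (e q * e p) + (xi q * xi q) * (e q * e q))"
    using pq by (simp add: sw)
  also have "\<dots> = xi p * xi p + xi q * xi q"
    using pq by (simp add: e_sq xqp eqp)
  finally show ?thesis .
qed

lemma C_X: assumes PQ: "(p = 1 \<and> q = 2) \<or> (p = 3 \<and> q = 4)"
  shows "CI p q * XI p q + XI p q * CI p q = 2 * XI p q"
proof -
  have pq: "p \<in> {1..4}" "q \<in> {1..4}" "p \<noteq> q" using PQ_facts[OF PQ] by auto
  define R where "R = x p * x p + x q * x q"
  have eR: "e k * R = R * e k" if "k \<in> {1..4}" for k
  proof -
    have "cm (e k) R" unfolding R_def using pq that by (intro cm_add cm_mult ex)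
    then show ?thesis by (simp add: cm_def)
  qed
  have one: "(xi k * e k) * R - R * (xi k * e k) = (xi k * R - R * xi k) * e k" if "k \<in> {1..4}" for k
  proof -
    have "(xi k * e k) * R = (xi k * R) * e k" by (simp add: mult.assoc eR[OF that])
    moreover have "R * (xi k * e k) = (R * xi k) * e k" by (simp add: mult.assoc)
    ultimately show ?thesis by (simp add: left_diff_distrib)
  qed
  have "CI p q * XI p q + XI p q * CI p q = DI p q * (XI p q * XI p q) - (XI p q * XI p q) * DI p q"
    unfolding CI_def by (simp add: algebra_simps)
  also have "\<dots> = DI p q * R - R * DI p q" unfolding R_def XI_sq[OF PQ] ..
  also have "\<dots> = ((xi p * e p) * R - R * (xi p * e p)) + ((xi q * e q) * R - R * (xi q * e q))"
    unfolding DI_def by (simp add: algebra_simps)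
  also have "\<dots> = (xi p * R - R * xi p) * e p + (xi q * R - R * xi q) * e q"
    using pq by (simp add: one)
  also have "\<dots> = (2 * x p) * e p + (2 * x q) * e q"
    unfolding R_def using dunkl_R[OF PQ] by simp
  also have "\<dots> = 2 * XI p q" unfolding XI_def by (simp add: algebra_simps)
  finally show ?thesis .
qed

lemma C_D: assumes PQ: "(p = 1 \<and> q = 2) \<or> (p = 3 \<and> q = 4)"
  shows "CI p q * DI p q + DI p q * CI p q = 2 * DI p q"
proof -
  have pq: "p \<in> {1..4}" "q \<in> {1..4}" "p \<noteq> q" using PQ_facts[OF PQ] by auto
  define L where "L = xi p * xi p + xi q * xi q"
  have eL: "e k * L = L * e k" if "k \<in> {1..4}" for k
  proof -
    have "cm (e k) L" unfolding L_def using pq that by (intro cm_add cm_mult exi)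
    then show ?thesis by (simp add: cm_def)
  qed
  have one: "L * (x k * e k) - (x k * e k) * L = (L * x k - x k * L) * e k" if "k \<in> {1..4}" for k
  proof -
    have "(x k * e k) * L = (x k * L) * e k" by (simp add: mult.assoc eL[OF that])
    moreover have "L * (x k * e k) = (L * x k) * e k" by (simp add: mult.assoc)
    ultimately show ?thesis by (simp add: left_diff_distrib)
  qed
  have "CI p q * DI p q + DI p q * CI p q = (DI p q * DI p q) * XI p q - XI p q * (DI p q * DI p q)"
    unfolding CI_def by (simp add: algebra_simps)
  also have "\<dots> = L * XI p q - XI p q * L" unfolding L_def DI_sq[OF PQ] ..
  also have "\<dots> = (L * (x p * e p) - (x p * e p) * L) + (L * (x q * e q) - (x q * e q) * L)"
    unfolding XI_def by (simp add: algebra_simps)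
  also have "\<dots> = (L * x p - x p * L) * e p + (L * x q - x q * L) * e q"
    using pq by (simp add: one)
  also have "\<dots> = (2 * xi p) * e p + (2 * xi q) * e q"
    unfolding L_def using dunkl_D[OF PQ] by simp
  also have "\<dots> = 2 * DI p q" unfolding DI_def by (simp add: algebra_simps)
  finally show ?thesis .
qed

end


context chm begin

lemma f_XX_12: "sp True (XI 1 2) (XI 3 4)"
  unfolding XI_def by (rule spR spL atoms)+
lemma f_XD_12: "sp True (XI 1 2) (DI 3 4)"
  unfolding XI_def DI_def by (rule spR spL atoms)+
lemma f_DX_12: "sp True (DI 1 2) (XI 3 4)"
  unfolding XI_def DI_def by (rule spR spL atoms)+
lemma f_DD_12: "sp True (DI 1 2) (DI 3 4)"
  unfolding DI_def by (rule spR spL atoms)+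
lemma f_NX_12: "sp True (NN 1 2) (XI 1 2)"
  unfolding XI_def NN_def by (rule spR spL atoms)+
lemma f_XN_12: "sp True (XI 1 2) (NN 1 2)"
  unfolding XI_def NN_def by (rule spR spL atoms)+
lemma f_ND_12: "sp True (NN 1 2) (DI 1 2)"
  unfolding DI_def NN_def by (rule spR spL atoms)+
lemma f_DN_12: "sp True (DI 1 2) (NN 1 2)"
  unfolding DI_def NN_def by (rule spR spL atoms)+
lemma f_NXo_12: "sp False (NN 1 2) (XI 3 4)"
  unfolding XI_def NN_def by (rule spR spL atoms)+
lemma f_XNo_12: "sp False (XI 3 4) (NN 1 2)"
  unfolding XI_def NN_def by (rule spR spL atoms)+
lemma f_NDo_12: "sp False (NN 1 2) (DI 3 4)"
  unfolding DI_def NN_def by (rule spR spL atoms)+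
lemma f_DNo_12: "sp False (DI 3 4) (NN 1 2)"
  unfolding DI_def NN_def by (rule spR spL atoms)+
lemma f_NN_12: "sp False (NN 1 2) (NN 3 4)"
  unfolding NN_def by (rule spR spL atoms)+
lemma f_XE_12: "sp True (XI 1 2) EE"
  unfolding XI_def EE_def by (rule spR spL atoms)+
lemma f_EX_12: "sp True EE (XI 1 2)"
  unfolding XI_def EE_def by (rule spR spL atoms)+
lemma f_DE_12: "sp True (DI 1 2) EE"
  unfolding DI_def EE_def by (rule spR spL atoms)+
lemma f_ED_12: "sp True EE (DI 1 2)"
  unfolding DI_def EE_def by (rule spR spL atoms)+
lemma f_NE_12: "sp False (NN 1 2) EE"
  unfolding NN_def EE_def by (rule spR spL atoms)+
lemma f_EN_12: "sp False EE (NN 1 2)"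
  unfolding NN_def EE_def by (rule spR spL atoms)+
lemma f_XX_34: "sp True (XI 3 4) (XI 1 2)"
  unfolding XI_def by (rule spR spL atoms)+
lemma f_XD_34: "sp True (XI 3 4) (DI 1 2)"
  unfolding XI_def DI_def by (rule spR spL atoms)+
lemma f_DX_34: "sp True (DI 3 4) (XI 1 2)"
  unfolding XI_def DI_def by (rule spR spL atoms)+
lemma f_DD_34: "sp True (DI 3 4) (DI 1 2)"
  unfolding DI_def by (rule spR spL atoms)+
lemma f_NX_34: "sp True (NN 3 4) (XI 3 4)"
  unfolding XI_def NN_def by (rule spR spL atoms)+
lemma f_XN_34: "sp True (XI 3 4) (NN 3 4)"
  unfolding XI_def NN_def by (rule spR spL atoms)+
lemma f_ND_34: "sp True (NN 3 4) (DI 3 4)"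
  unfolding DI_def NN_def by (rule spR spL atoms)+
lemma f_DN_34: "sp True (DI 3 4) (NN 3 4)"
  unfolding DI_def NN_def by (rule spR spL atoms)+
lemma f_NXo_34: "sp False (NN 3 4) (XI 1 2)"
  unfolding XI_def NN_def by (rule spR spL atoms)+
lemma f_XNo_34: "sp False (XI 1 2) (NN 3 4)"
  unfolding XI_def NN_def by (rule spR spL atoms)+
lemma f_NDo_34: "sp False (NN 3 4) (DI 1 2)"
  unfolding DI_def NN_def by (rule spR spL atoms)+
lemma f_DNo_34: "sp False (DI 1 2) (NN 3 4)"
  unfolding DI_def NN_def by (rule spR spL atoms)+
lemma f_NN_34: "sp False (NN 3 4) (NN 1 2)"
  unfolding NN_def by (rule spR spL atoms)+
lemma f_XE_34: "sp True (XI 3 4) EE"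
  unfolding XI_def EE_def by (rule spR spL atoms)+
lemma f_EX_34: "sp True EE (XI 3 4)"
  unfolding XI_def EE_def by (rule spR spL atoms)+
lemma f_DE_34: "sp True (DI 3 4) EE"
  unfolding DI_def EE_def by (rule spR spL atoms)+
lemma f_ED_34: "sp True EE (DI 3 4)"
  unfolding DI_def EE_def by (rule spR spL atoms)+
lemma f_NE_34: "sp False (NN 3 4) EE"
  unfolding NN_def EE_def by (rule spR spL atoms)+
lemma f_EN_34: "sp False EE (NN 3 4)"
  unfolding NN_def EE_def by (rule spR spL atoms)+
lemmas flev = f_XX_12 f_XD_12 f_DX_12 f_DD_12 f_NX_12 f_XN_12 f_ND_12 f_DN_12 f_NXo_12 f_XNo_12 f_NDo_12 f_DNo_12 f_NN_12 f_XE_12 f_EX_12 f_DE_12 f_ED_12 f_NE_12 f_EN_12 f_XX_34 f_XD_34 f_DX_34 f_DD_34 f_NX_34 f_XN_34 f_ND_34 f_DN_34 f_NXo_34 f_XNo_34 f_NDo_34 f_DNo_34 f_NN_34 f_XE_34 f_EX_34 f_DE_34 f_ED_34 f_NE_34 f_EN_34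

lemma g_CN_12: "sp False (CI 1 2) (NN 1 2)"
  unfolding CI_def[of 1 2] by (rule spR spL atoms flev)+
lemma g_CX_12: "sp False (CI 1 2) (XI 3 4)"
  unfolding CI_def[of 1 2] by (rule spR spL atoms flev)+
lemma g_CD_12: "sp False (CI 1 2) (DI 3 4)"
  unfolding CI_def[of 1 2] by (rule spR spL atoms flev)+
lemma g_CNo_12: "sp False (CI 1 2) (NN 3 4)"
  unfolding CI_def[of 1 2] by (rule spR spL atoms flev)+
lemma g_CE_12: "sp False (CI 1 2) EE"
  unfolding CI_def[of 1 2] by (rule spR spL atoms flev)+
lemma g_CN_34: "sp False (CI 3 4) (NN 3 4)"
  unfolding CI_def[of 3 4] by (rule spR spL atoms flev)+
lemma g_CX_34: "sp False (CI 3 4) (XI 1 2)"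
  unfolding CI_def[of 3 4] by (rule spR spL atoms flev)+
lemma g_CD_34: "sp False (CI 3 4) (DI 1 2)"
  unfolding CI_def[of 3 4] by (rule spR spL atoms flev)+
lemma g_CNo_34: "sp False (CI 3 4) (NN 1 2)"
  unfolding CI_def[of 3 4] by (rule spR spL atoms flev)+
lemma g_CE_34: "sp False (CI 3 4) EE"
  unfolding CI_def[of 3 4] by (rule spR spL atoms flev)+
lemmas glev = g_CN_12 g_CX_12 g_CD_12 g_CNo_12 g_CE_12 g_CN_34 g_CX_34 g_CD_34 g_CNo_34 g_CE_34

lemma h_MX_12: "sp False (MI 1 2) (XI 1 2)"
proof (rule sp_cm)
  have N: "NN 1 2 * XI 1 2 = - (XI 1 2 * NN 1 2)" using acm_sp[OF f_NX_12] by (simp add: acm_def)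
  show "cm (MI 1 2) (XI 1 2)" unfolding cm_def MI_def by (rule acm_key[OF N C_X]) simp
qed
lemma h_MD_12: "sp False (MI 1 2) (DI 1 2)"
proof (rule sp_cm)
  have N: "NN 1 2 * DI 1 2 = - (DI 1 2 * NN 1 2)" using acm_sp[OF f_ND_12] by (simp add: acm_def)
  show "cm (MI 1 2) (DI 1 2)" unfolding cm_def MI_def by (rule acm_key[OF N C_D]) simp
qed
lemma h_MXo_12: "sp False (MI 1 2) (XI 3 4)" unfolding MI_def[of 1 2] by (rule spR spL atoms flev glev)+
lemma h_MDo_12: "sp False (MI 1 2) (DI 3 4)" unfolding MI_def[of 1 2] by (rule spR spL atoms flev glev)+
lemma h_MNo_12: "sp False (MI 1 2) (NN 3 4)" unfolding MI_def[of 1 2] by (rule spR spL atoms flev glev)+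
lemma h_ME_12: "sp False (MI 1 2) EE" unfolding MI_def[of 1 2] by (rule spR spL atoms flev glev)+

lemma h_MX_34: "sp False (MI 3 4) (XI 3 4)"
proof (rule sp_cm)
  have N: "NN 3 4 * XI 3 4 = - (XI 3 4 * NN 3 4)" using acm_sp[OF f_NX_34] by (simp add: acm_def)
  show "cm (MI 3 4) (XI 3 4)" unfolding cm_def MI_def by (rule acm_key[OF N C_X]) simp
qed
lemma h_MD_34: "sp False (MI 3 4) (DI 3 4)"
proof (rule sp_cm)
  have N: "NN 3 4 * DI 3 4 = - (DI 3 4 * NN 3 4)" using acm_sp[OF f_ND_34] by (simp add: acm_def)
  show "cm (MI 3 4) (DI 3 4)" unfolding cm_def MI_def by (rule acm_key[OF N C_D]) simp
qed
lemma h_MXo_34: "sp False (MI 3 4) (XI 1 2)" unfolding MI_def[of 3 4] by (rule spR spL atoms flev glev)+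
lemma h_MDo_34: "sp False (MI 3 4) (DI 1 2)" unfolding MI_def[of 3 4] by (rule spR spL atoms flev glev)+
lemma h_MNo_34: "sp False (MI 3 4) (NN 1 2)" unfolding MI_def[of 3 4] by (rule spR spL atoms flev glev)+
lemma h_ME_34: "sp False (MI 3 4) EE" unfolding MI_def[of 3 4] by (rule spR spL atoms flev glev)+

lemmas hlev = h_MX_12 h_MD_12 h_MXo_12 h_MDo_12 h_MNo_12 h_ME_12 h_MX_34 h_MD_34 h_MXo_34 h_MDo_34 h_MNo_34 h_ME_34

definition ZZ where "ZZ = (1 - ((DI 1 2 + DI 3 4) * (XI 1 2 + XI 3 4) - (XI 1 2 + XI 3 4) * (DI 1 2 + DI 3 4))) * EE"

lemma MM_comm: "cm (MI 1 2) (MI 3 4)"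
  unfolding MI_def[of 3 4] CI_def[of 3 4] by (rule cm_sp, (rule spR spL atoms flev glev hlev)+)
lemma MZ1: "cm (MI 1 2) ZZ"
  unfolding ZZ_def by (rule cm_sp, (rule spR spL atoms flev glev hlev)+)
lemma MZ2: "cm (MI 3 4) ZZ"
  unfolding ZZ_def by (rule cm_sp, (rule spR spL atoms flev glev hlev)+)

end


context chm begin

definition gam where "gam a = gvec c e (\<lambda>j. complex_of_real (a j))"

lemma gam_def2: "gam a = (\<Sum>k\<in>{1..4}. c (complex_of_real (a k)) * e k)"
  unfolding gam_def gvec_def ..

lemma G1: assumes j: "j \<in> {1..4}"
  shows "gam a * e j + e j * gam a = 2 * c (complex_of_real (a j))"
proof -
  have "gam a * e j + e j * gam a = (\<Sum>k\<in>{1..4}. c (complex_of_real (a k)) * (e k * e j + e j * e k))"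
    unfolding gam_def2 by (simp add: sum_distrib_right sum_distrib_left sum.distrib[symmetric] distrib_left c_lc mult.assoc)
  also have "\<dots> = (\<Sum>k\<in>{1..4}. if k = j then 2 * c (complex_of_real (a k)) else 0)"
    by (rule sum.cong) (use j in \<open>auto simp: ee c_two c_comm\<close>)
  also have "\<dots> = 2 * c (complex_of_real (a j))" using j by simp
  finally show ?thesis .
qed

lemma G2: "gam a * gam b + gam b * gam a = 2 * c (complex_of_real (inner4 a b))"
proof -
  have "gam a * gam b + gam b * gam a = (\<Sum>k\<in>{1..4}. c (complex_of_real (a k)) * (e k * gam b + gam b * e k))"
    unfolding gam_def2[of a] by (simp add: sum_distrib_right sum_distrib_left sum.distrib[symmetric] distrib_left c_lc mult.assoc)
  also have "\<dots> = (\<Sum>k\<in>{1..4}. 2 * c (complex_of_real (a k * b k)))"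
  proof (rule sum.cong)
    fix k :: nat assume k: "k \<in> {1..4}"
    have "e k * gam b + gam b * e k = 2 * c (complex_of_real (b k))" using G1[OF k, of b] by (simp add: add.commute)
    then show "c (complex_of_real (a k)) * (e k * gam b + gam b * e k) = 2 * c (complex_of_real (a k * b k))"
      by (simp add: c_two c_mult)
  qed simp
  also have "\<dots> = 2 * c (complex_of_real (inner4 a b))"
    unfolding inner4_def by (simp add: sum_distrib_left c_sum)
  finally show ?thesis .
qed

lemma G3: assumes a: "a \<in> roots m1 m2" shows "gam a * gam a = 1"
proof -
  have "inner4 a a = 1" using roots_cases[OF a] by blast
  then have "2 * (gam a * gam a) = 2 * 1" using G2[of a a] by (simp add: mult_2 c_one)
  then show ?thesis by (rule cancel2)
qed

lemma gam_x: assumes k: "k \<in> {1..4}" shows "cm (gam a) (x k)"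
proof -
  have "cm (x k) (gam a)" unfolding gam_def2
  proof (rule cm_sum)
    fix j :: nat assume "j \<in> {1..4}"
    then show "cm (x k) (c (complex_of_real (a j)) * e j)" using k by (intro cm_mult cm_c cm_sym[OF ex])
  qed
  then show ?thesis by (rule cm_sym)
qed

lemma gam_xi: assumes k: "k \<in> {1..4}" shows "cm (gam a) (xi k)"
proof -
  have "cm (xi k) (gam a)" unfolding gam_def2
  proof (rule cm_sum)
    fix j :: nat assume "j \<in> {1..4}"
    then show "cm (xi k) (c (complex_of_real (a j)) * e j)" using k by (intro cm_mult cm_c cm_sym[OF exi])
  qed
  then show ?thesis by (rule cm_sym)
qed

lemma gam_g: assumes w: "w \<in> weyl m1 m2" shows "cm (gam a) (g w)"
proof -
  have "cm (g w) (gam a)" unfolding gam_def2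
  proof (rule cm_sum)
    fix j :: nat assume "j \<in> {1..4}"
    then show "cm (g w) (c (complex_of_real (a j)) * e j)" using w by (intro cm_mult cm_c cm_sym[OF eg])
  qed
  then show ?thesis by (rule cm_sym)
qed

lemma num_lc: "(y::'a) * (2 * z) = 2 * (y * z)"
proof -
  have "cm y 2" by (rule cm_numeral)
  then have "y * 2 = 2 * y" by (simp add: cm_def)
  then show ?thesis by (simp add: mult.assoc[symmetric])
qed

lemma st_eq: "stilde c g e a = g (refl_mat a) * gam a"
  unfolding stilde_def gam_def ..

lemma S1_gen:
  fixes y :: "nat \<Rightarrow> 'a"
  assumes a: "a \<in> roots m1 m2"
    and H: "\<And>j. j \<in> {1..4} \<Longrightarrow> g (refl_mat a) * y j = (\<Sum>k\<in>{1..4}. c (complex_of_real (refl_mat a k j)) * y k) * g (refl_mat a)"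
    and gy: "\<And>k. k \<in> {1..4} \<Longrightarrow> cm (gam a) (y k)"
    and ey: "\<And>j k. j \<in> {1..4} \<Longrightarrow> k \<in> {1..4} \<Longrightarrow> cm (e j) (y k)"
  shows "stilde c g e a * (\<Sum>j\<in>{1..4}. y j * e j) = - ((\<Sum>j\<in>{1..4}. y j * e j) * stilde c g e a)"
proof -
  define G where "G = g (refl_mat a)"
  define \<gamma> where "\<gamma> = gam a"
  define ay where "ay = (\<Sum>k\<in>{1..4}. c (complex_of_real (a k)) * y k)"
  define Y where "Y = (\<Sum>j\<in>{1..4}. y j * e j)"
  have w: "refl_mat a \<in> weyl m1 m2" by (rule refl_weyl[OF a])
  have Ge: "G * e j = e j * G" if "j \<in> {1..4}" for j using eg[OF that w] by (simp add: cm_def G_def)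
  have gG: "\<gamma> * G = G * \<gamma>" using gam_g[OF w] by (simp add: cm_def G_def \<gamma>_def)
  have gg: "\<gamma> * \<gamma> = 1" unfolding \<gamma>_def by (rule G3[OF a])
  have Gay: "G * ay = - (ay * G)" unfolding G_def ay_def by (rule g_anti_gen[OF a H])
  have i: "\<gamma> * Y = 2 * ay - Y * \<gamma>"
  proof -
    have t: "\<gamma> * (y j * e j) = 2 * (c (complex_of_real (a j)) * y j) - (y j * e j) * \<gamma>" if j: "j \<in> {1..4}" for j
    proof -
      have "\<gamma> * (y j * e j) = y j * (\<gamma> * e j)" using gy[OF j] by (simp add: cm_def \<gamma>_def mult.assoc[symmetric])
      also have "\<gamma> * e j = 2 * c (complex_of_real (a j)) - e j * \<gamma>" using G1[OF j, of a] by (simp add: \<gamma>_def eq_diff_eq)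
      finally show ?thesis by (simp add: right_diff_distrib num_lc c_comm mult.assoc)
    qed
    have "\<gamma> * Y = (\<Sum>j\<in>{1..4}. 2 * (c (complex_of_real (a j)) * y j) - (y j * e j) * \<gamma>)"
      unfolding Y_def sum_distrib_left by (rule sum.cong) (simp_all add: t)
    also have "\<dots> = 2 * ay - Y * \<gamma>" unfolding ay_def Y_def
      by (simp add: sum_subtractf sum_distrib_left sum_distrib_right)
    finally show ?thesis .
  qed
  have ii: "G * Y = (Y - 2 * (ay * \<gamma>)) * G"
  proof -
    have t: "G * (y j * e j) = (y j * e j - 2 * (ay * (c (complex_of_real (a j)) * e j))) * G" if j: "j \<in> {1..4}" for j
    proof -
      have "G * (y j * e j) = (G * y j) * e j" by (simp add: mult.assoc)
      also have "G * y j = (y j - 2 * (c (complex_of_real (a j)) * ay)) * G"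
        unfolding G_def ay_def by (rule g_refl_gen[OF a H j])
      also have "(y j - 2 * (c (complex_of_real (a j)) * ay)) * G * e j = (y j - 2 * (c (complex_of_real (a j)) * ay)) * e j * G"
        by (simp add: mult.assoc Ge[OF j])
      also have "\<dots> = (y j * e j - 2 * (ay * (c (complex_of_real (a j)) * e j))) * G"
        by (simp add: left_diff_distrib mult.assoc c_comm)
      finally show ?thesis .
    qed
    have "G * Y = (\<Sum>j\<in>{1..4}. (y j * e j - 2 * (ay * (c (complex_of_real (a j)) * e j))) * G)"
      unfolding Y_def sum_distrib_left by (rule sum.cong) (simp_all add: t)
    also have "\<dots> = (Y - 2 * (ay * \<gamma>)) * G" unfolding Y_def \<gamma>_def gam_def2
      by (simp add: sum_subtractf sum_distrib_left sum_distrib_right left_diff_distrib)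
    finally show ?thesis .
  qed
  have "G * \<gamma> * Y = G * (2 * ay - Y * \<gamma>)" by (simp add: mult.assoc i)
  also have "\<dots> = 2 * (G * ay) - (G * Y) * \<gamma>" by (simp add: right_diff_distrib num_lc mult.assoc)
  also have "\<dots> = - (2 * (ay * G)) - (Y - 2 * (ay * \<gamma>)) * G * \<gamma>" by (simp add: Gay ii)
  also have "\<dots> = - (2 * (ay * G)) - Y * G * \<gamma> + 2 * (ay * (\<gamma> * G * \<gamma>))"
    by (simp add: left_diff_distrib mult.assoc)
  also have "\<gamma> * G * \<gamma> = G" by (simp add: gG mult.assoc gg)
  finally have "G * \<gamma> * Y = - (Y * (G * \<gamma>))" by (simp add: mult.assoc)
  then show ?thesis unfolding st_eq G_def \<gamma>_def Y_def .
qed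

lemma S1x: assumes a: "a \<in> roots m1 m2" shows "acm (stilde c g e a) (xu x e)"
  unfolding acm_def xu_def by (rule S1_gen[OF a gx[OF refl_weyl[OF a]] gam_x ex])

lemma S1xi: assumes a: "a \<in> roots m1 m2" shows "acm (stilde c g e a) (Du xi e)"
  unfolding acm_def Du_def by (rule S1_gen[OF a gxi[OF refl_weyl[OF a]] gam_xi exi])

end


lemma refl_comm:
  assumes ia: "inner4 a a = 1" and ib: "inner4 b b = 1"
    and z: "a 3 = 0" "a 4 = 0" "b 1 = 0" "b 2 = 0"
  shows "mat_mul (refl_mat a) (refl_mat b) = mat_mul (refl_mat b) (refl_mat a)"
proof (intro ext)
  fix i j :: nat
  show "mat_mul (refl_mat a) (refl_mat b) i j = mat_mul (refl_mat b) (refl_mat a) i j"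
  proof (cases "i \<in> {1..4} \<and> j \<in> {1..4}")
    case False
    then show ?thesis unfolding mat_mul_def refl_unit[OF ia] refl_unit[OF ib] by auto
  next
    case True
    then have ci: "i = 1 \<or> i = 2 \<or> i = 3 \<or> i = 4" and cj: "j = 1 \<or> j = 2 \<or> j = 3 \<or> j = 4" by auto
    show ?thesis unfolding mat_mul_def sum4 refl_unit[OF ia] refl_unit[OF ib]
      using ci cj z by (elim disjE) simp_all
  qed
qed

context chm begin

lemma S2_gen:
  fixes y :: "nat \<Rightarrow> 'a"
  assumes a: "a \<in> roots m1 m2" and r: "r \<in> {1..4}" and ar: "a r = 0"
    and H: "\<And>j. j \<in> {1..4} \<Longrightarrow> g (refl_mat a) * y j = (\<Sum>k\<in>{1..4}. c (complex_of_real (refl_mat a k j)) * y k) * g (refl_mat a)"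
    and gy: "cm (gam a) (y r)"
    and ey: "cm (e r) (y r)"
  shows "sp True (stilde c g e a) (y r * e r)"
proof -
  have w: "refl_mat a \<in> weyl m1 m2" by (rule refl_weyl[OF a])
  have f1: "sp False (g (refl_mat a)) (y r)"
  proof (rule sp_cm)
    have "g (refl_mat a) * y r = (y r - 2 * (c (complex_of_real (a r)) * (\<Sum>k\<in>{1..4}. c (complex_of_real (a k)) * y k))) * g (refl_mat a)"
      by (rule g_refl_gen[OF a H r])
    then show "cm (g (refl_mat a)) (y r)" using ar by (simp add: cm_def c_zero)
  qed
  have f2: "sp False (g (refl_mat a)) (e r)" by (rule sp_cmS, rule eg[OF r w])
  have f3: "sp False (gam a) (y r)" by (rule sp_cm[OF gy])
  have f4: "sp True (gam a) (e r)"
  proof (rule sp_acm)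
    show "acm (gam a) (e r)" using G1[OF r, of a] ar by (simp add: acm_def c_zero eq_neg_iff_add_eq_0)
  qed
  show ?thesis unfolding st_eq by (rule spR spL f1 f2 f3 f4)+
qed

lemma XX_split: "xu x e = XI 1 2 + XI 3 4" unfolding xu_def XI_def sum4 by (simp add: add.assoc)
lemma DD_split: "Du xi e = DI 1 2 + DI 3 4" unfolding Du_def DI_def sum4 by (simp add: add.assoc)

lemma stA:
  assumes a: "a \<in> roots m1 m2" and z: "a 3 = 0" "a 4 = 0"
  shows "sp True (stilde c g e a) (XI 1 2)" "sp True (stilde c g e a) (DI 1 2)"
        "sp True (stilde c g e a) (XI 3 4)" "sp True (stilde c g e a) (DI 3 4)"
proof -
  have X3: "sp True (stilde c g e a) (x 3 * e 3)" by (rule S2_gen[OF a _ z(1) gx[OF refl_weyl[OF a]] gam_x ex]) simp_all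
  have X4: "sp True (stilde c g e a) (x 4 * e 4)" by (rule S2_gen[OF a _ z(2) gx[OF refl_weyl[OF a]] gam_x ex]) simp_all
  have D3: "sp True (stilde c g e a) (xi 3 * e 3)" by (rule S2_gen[OF a _ z(1) gxi[OF refl_weyl[OF a]] gam_xi exi]) simp_all
  have D4: "sp True (stilde c g e a) (xi 4 * e 4)" by (rule S2_gen[OF a _ z(2) gxi[OF refl_weyl[OF a]] gam_xi exi]) simp_all
  show XI34: "sp True (stilde c g e a) (XI 3 4)" unfolding XI_def by (rule spR X3 X4)+
  show DI34: "sp True (stilde c g e a) (DI 3 4)" unfolding DI_def by (rule spR D3 D4)+
  have "XI 1 2 = xu x e - XI 3 4" by (simp add: XX_split)
  moreover have "sp True (stilde c g e a) (xu x e)" by (rule sp_acm[OF S1x[OF a]])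
  ultimately show "sp True (stilde c g e a) (XI 1 2)" using XI34 by (simp only:) (rule spR_diff, assumption+, rule beq_refl, rule beq_refl)
  have "DI 1 2 = Du xi e - DI 3 4" by (simp add: DD_split)
  moreover have "sp True (stilde c g e a) (Du xi e)" by (rule sp_acm[OF S1xi[OF a]])
  ultimately show "sp True (stilde c g e a) (DI 1 2)" using DI34 by (simp only:) (rule spR_diff, assumption+, rule beq_refl, rule beq_refl)
qed

lemma stB:
  assumes a: "a \<in> roots m1 m2" and z: "a 1 = 0" "a 2 = 0"
  shows "sp True (stilde c g e a) (XI 1 2)" "sp True (stilde c g e a) (DI 1 2)"
        "sp True (stilde c g e a) (XI 3 4)" "sp True (stilde c g e a) (DI 3 4)"
proof -
  have X3: "sp True (stilde c g e a) (x 1 * e 1)" by (rule S2_gen[OF a _ z(1) gx[OF refl_weyl[OF a]] gam_x ex]) simp_all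
  have X4: "sp True (stilde c g e a) (x 2 * e 2)" by (rule S2_gen[OF a _ z(2) gx[OF refl_weyl[OF a]] gam_x ex]) simp_all
  have D3: "sp True (stilde c g e a) (xi 1 * e 1)" by (rule S2_gen[OF a _ z(1) gxi[OF refl_weyl[OF a]] gam_xi exi]) simp_all
  have D4: "sp True (stilde c g e a) (xi 2 * e 2)" by (rule S2_gen[OF a _ z(2) gxi[OF refl_weyl[OF a]] gam_xi exi]) simp_all
  show XI12: "sp True (stilde c g e a) (XI 1 2)" unfolding XI_def by (rule spR X3 X4)+
  show DI12: "sp True (stilde c g e a) (DI 1 2)" unfolding DI_def by (rule spR D3 D4)+
  have "XI 3 4 = xu x e - XI 1 2" by (simp add: XX_split)
  moreover have "sp True (stilde c g e a) (xu x e)" by (rule sp_acm[OF S1x[OF a]])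
  ultimately show "sp True (stilde c g e a) (XI 3 4)" using XI12 by (simp only:) (rule spR_diff, assumption+, rule beq_refl, rule beq_refl)
  have "DI 3 4 = Du xi e - DI 1 2" by (simp add: DD_split)
  moreover have "sp True (stilde c g e a) (Du xi e)" by (rule sp_acm[OF S1xi[OF a]])
  ultimately show "sp True (stilde c g e a) (DI 3 4)" using DI12 by (simp only:) (rule spR_diff, assumption+, rule beq_refl, rule beq_refl)
qed

end


context chm begin

lemma gamA: "a 3 = 0 \<Longrightarrow> a 4 = 0 \<Longrightarrow> gam a = c (complex_of_real (a 1)) * e 1 + c (complex_of_real (a 2)) * e 2"
  unfolding gam_def2 sum4 by (simp add: c_zero)
lemma gamB: "a 1 = 0 \<Longrightarrow> a 2 = 0 \<Longrightarrow> gam a = c (complex_of_real (a 3)) * e 3 + c (complex_of_real (a 4)) * e 4"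
  unfolding gam_def2 sum4 by (simp add: c_zero)

lemma Gat: assumes a: "a \<in> roots m1 m2"
  shows "sp False (g (refl_mat a)) (e 1)" "sp False (g (refl_mat a)) (e 2)" "sp False (g (refl_mat a)) (e 3)" "sp False (g (refl_mat a)) (e 4)"
        "sp False (e 1) (g (refl_mat a))" "sp False (e 2) (g (refl_mat a))" "sp False (e 3) (g (refl_mat a))" "sp False (e 4) (g (refl_mat a))"
  using refl_weyl[OF a] by (auto intro: sp_cmS[OF eg] sp_cm[OF eg])

lemma stA2:
  assumes a: "a \<in> roots m1 m2" and z: "a 3 = 0" "a 4 = 0"
  shows "sp True (stilde c g e a) (NN 1 2)" "sp False (stilde c g e a) (NN 3 4)" "sp True (stilde c g e a) EE"
  unfolding st_eq gamA[OF z] NN_def EE_def by (rule spR spL atoms Gat[OF a] spL_c spR_c)+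

lemma stB2:
  assumes a: "a \<in> roots m1 m2" and z: "a 1 = 0" "a 2 = 0"
  shows "sp False (stilde c g e a) (NN 1 2)" "sp True (stilde c g e a) (NN 3 4)" "sp True (stilde c g e a) EE"
  unfolding st_eq gamB[OF z] NN_def EE_def by (rule spR spL atoms Gat[OF a] spL_c spR_c)+

lemma stAB:
  assumes a: "a \<in> roots m1 m2" and za: "a 3 = 0" "a 4 = 0"
    and b: "b \<in> roots m1 m2" and zb: "b 1 = 0" "b 2 = 0"
  shows "sp True (stilde c g e a) (stilde c g e b)"
proof -
  have ia: "inner4 a a = 1" using roots_cases[OF a] by blast
  have ib: "inner4 b b = 1" using roots_cases[OF b] by blast
  have gg: "sp False (g (refl_mat a)) (g (refl_mat b))"
  proof (rule sp_cm)
    have "g (refl_mat a) * g (refl_mat b) = g (mat_mul (refl_mat a) (refl_mat b))"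
      by (rule g_mul[symmetric]) (simp_all add: refl_weyl a b)
    also have "\<dots> = g (mat_mul (refl_mat b) (refl_mat a))" by (simp add: refl_comm[OF ia ib za zb])
    also have "\<dots> = g (refl_mat b) * g (refl_mat a)" by (rule g_mul) (simp_all add: refl_weyl a b)
    finally show "cm (g (refl_mat a)) (g (refl_mat b))" by (simp add: cm_def)
  qed
  show ?thesis unfolding st_eq gamA[OF za] gamB[OF zb]
    by (rule spR spL atoms Gat[OF a] Gat[OF b] gg spL_c spR_c)+
qed

lemma r_comm:
  assumes a1: "a1 \<in> roots m1 m2" "a1 3 = 0" "a1 4 = 0"
    and a2: "a2 \<in> roots m1 m2" "a2 3 = 0" "a2 4 = 0"
    and b1: "b1 \<in> roots m1 m2" "b1 1 = 0" "b1 2 = 0"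
    and b2: "b2 \<in> roots m1 m2" "b2 1 = 0" "b2 2 = 0"
  defines "r1 \<equiv> - (stilde c g e a1 * stilde c g e a2)"
    and "r2 \<equiv> - (stilde c g e b1 * stilde c g e b2)"
  shows "cm r1 (MI 1 2)" "cm r1 (MI 3 4)" "cm r1 ZZ" "cm r2 (MI 1 2)" "cm r2 (MI 3 4)" "cm r2 ZZ" "cm r1 r2"
proof -
  note F = stA[OF a1] stA[OF a2] stB[OF b1] stB[OF b2] stA2[OF a1] stA2[OF a2] stB2[OF b1] stB2[OF b2]
  show "cm r1 (MI 1 2)" unfolding r1_def MI_def CI_def by (rule cm_sp, (rule spR spL F flev)+)
  show "cm r1 (MI 3 4)" unfolding r1_def MI_def CI_def by (rule cm_sp, (rule spR spL F flev)+)
  show "cm r1 ZZ" unfolding r1_def ZZ_def by (rule cm_sp, (rule spR spL F flev)+)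
  show "cm r2 (MI 1 2)" unfolding r2_def MI_def CI_def by (rule cm_sp, (rule spR spL F flev)+)
  show "cm r2 (MI 3 4)" unfolding r2_def MI_def CI_def by (rule cm_sp, (rule spR spL F flev)+)
  show "cm r2 ZZ" unfolding r2_def ZZ_def by (rule cm_sp, (rule spR spL F flev)+)
  show "cm r1 r2" unfolding r1_def r2_def
    by (rule cm_sp, (rule spR spL stAB[OF a1 b1] stAB[OF a1 b2] stAB[OF a2 b1] stAB[OF a2 b2])+)
qed

end


lemma perms2: "{\<sigma>. \<sigma> permutes {0..<2::nat}} = {id, Transposition.transpose 0 1}"
proof (intro set_eqI iffI)
  fix \<sigma> assume "\<sigma> \<in> {\<sigma>. \<sigma> permutes {0..<2::nat}}"
  then have p: "\<sigma> permutes {0..<2::nat}" by simp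
  have out: "\<sigma> k = k" if "k \<ge> 2" for k using permutes_not_in[OF p] that by auto
  have s0: "\<sigma> 0 \<in> {0..<2}" using permutes_in_image[OF p, of 0] by simp
  have s1: "\<sigma> 1 \<in> {0..<2}" using permutes_in_image[OF p, of 1] by simp
  have inj: "\<sigma> 0 \<noteq> \<sigma> 1"
  proof
    assume h: "\<sigma> 0 = \<sigma> 1"
    have "(0::nat) = 1" by (rule injD[OF permutes_inj[OF p] h])
    then show False by simp
  qed
  show "\<sigma> \<in> {id, Transposition.transpose 0 1}"
  proof (cases "\<sigma> 0 = 0")
    case True
    then have "\<sigma> 1 = 1" using s1 inj by auto
    have "\<sigma> = id"
    proof (rule ext)
      fix k show "\<sigma> k = id k"
        using True \<open>\<sigma> 1 = 1\<close> out[of k] by (cases "k = 0"; cases "k = 1") auto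
    qed
    then show ?thesis by simp
  next
    case False
    then have a: "\<sigma> 0 = 1" using s0 by auto
    then have b: "\<sigma> 1 = 0" using s1 inj by auto
    have "\<sigma> = Transposition.transpose 0 1"
    proof (rule ext)
      fix k show "\<sigma> k = Transposition.transpose 0 1 k"
        using a b out[of k] by (cases "k = 0"; cases "k = 1") (auto simp: transpose_def)
    qed
    then show ?thesis by simp
  qed
next
  fix \<sigma> assume "\<sigma> \<in> {id, Transposition.transpose (0::nat) 1}"
  then show "\<sigma> \<in> {\<sigma>. \<sigma> permutes {0..<2::nat}}"
    by (auto simp: permutes_id permutes_swap_id)
qed

context chm begin

lemma c_of_int: "c (of_int k) = of_int k"
proof (cases "k \<ge> 0")
  case True
  then obtain n where "k = int n" by (metis nonneg_int_cases)
  then show ?thesis by (simp add: c_of_nat[of n, simplified])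
next
  case False
  then obtain n where "k = - int n" by (metis nonpos_int_cases linorder_not_le less_imp_le)
  then show ?thesis using c_of_nat[of n] by (simp add: c_minus)
qed

lemma gwedge2: "gwedge c e [u, v] = c (1/2) * (gvec c e u * gvec c e v - gvec c e v * gvec c e u)"
proof -
  have ne: "id \<noteq> Transposition.transpose (0::nat) 1"
  proof
    assume "id = Transposition.transpose (0::nat) 1"
    then have "id (0::nat) = Transposition.transpose 0 1 0" by simp
    then show False by simp
  qed
  have l: "[0..<2] = [0::nat, 1]" by (simp add: upt_rec)
  have len: "length [u, v] = 2" by simp
  define F where "F \<sigma> = c (complex_of_int (sign \<sigma>)) * prod_list (map (\<lambda>i. gvec c e ([u, v] ! \<sigma> i)) [0..<2])" for \<sigma> :: "nat \<Rightarrow> nat"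
  have "gwedge c e [u, v] = c (1 / of_nat (fact 2)) * (\<Sum>\<sigma>\<in>{id, Transposition.transpose 0 1}. F \<sigma>)"
    unfolding gwedge_def len perms2 F_def ..
  also have "(\<Sum>\<sigma>\<in>{id, Transposition.transpose 0 1}. F \<sigma>) = F id + F (Transposition.transpose 0 1)"
    using ne by simp
  also have "F id = gvec c e u * gvec c e v" unfolding F_def l by (simp add: c_one)
  also have "F (Transposition.transpose 0 1) = - (gvec c e v * gvec c e u)" unfolding F_def l
    by (simp add: c_one c_minus sign_swap_id)
  finally show ?thesis by simp
qed

end


lemma pop_alg:
  fixes N X1 X2 D1 D2 :: "'a::ring_1"
  assumes h1: "N*X1 = -(X1*N)" and h2: "N*X2 = X2*N" and h3: "N*D1 = -(D1*N)" and h4: "N*D2 = D2*N"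
    and h5: "D2*X1 = -(X1*D2)"
  shows "(D1+D2)*((X1+X2)*N - N*(X1+X2)) + ((X1+X2)*N - N*(X1+X2))*(D1+D2) = 2*((D1*X1 - X1*D1)*N)"
proof -
  have a: "(X1+X2)*N - N*(X1+X2) = X1*N + X1*N"
  proof -
    have "(X1+X2)*N - N*(X1+X2) = X1*N + X2*N - (N*X1 + N*X2)" by (simp only: distrib_left distrib_right)
    also have "\<dots> = X1*N + X2*N - (-(X1*N) + X2*N)" by (simp only: h1 h2)
    also have "\<dots> = X1*N + X1*N" by (simp add: algebra_simps)
    finally show ?thesis .
  qed
  have f1: "X1*N*D1 = -(X1*D1*N)" using h3 by (simp add: mult.assoc)
  have f2: "X1*N*D2 = X1*D2*N" using h4 by (simp add: mult.assoc)
  have f3: "D2*X1*N = -(X1*D2*N)" by (simp only: h5 mult_minus_left)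
  have b: "(D1+D2)*(X1*N) + (X1*N)*(D1+D2) = (D1*X1 - X1*D1)*N"
  proof -
    have "(D1+D2)*(X1*N) + (X1*N)*(D1+D2) = D1*X1*N + D2*X1*N + (X1*N*D1 + X1*N*D2)"
      by (simp only: distrib_left distrib_right mult.assoc)
    also have "\<dots> = D1*X1*N + -(X1*D2*N) + (-(X1*D1*N) + X1*D2*N)" by (simp only: f1 f2 f3)
    also have "\<dots> = (D1*X1 - X1*D1)*N" by (simp add: algebra_simps)
    finally show ?thesis .
  qed
  define W where "W = X1*N"
  have "(D1+D2)*(W+W) + (W+W)*(D1+D2) = ((D1+D2)*W + W*(D1+D2)) + ((D1+D2)*W + W*(D1+D2))"
    by (simp only: distrib_left distrib_right add_ac)
  then show ?thesis unfolding a unfolding W_def[symmetric] using b[folded W_def] by (simp only: mult_2)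
qed

lemma pop_algE:
  fixes N X D :: "'a::ring_1"
  assumes h1: "N*X = -(X*N)" and h2: "N*D = -(D*N)"
  shows "D*(X*N - N*X) + (X*N - N*X)*D = 2*((D*X - X*D)*N)"
proof -
  have a: "X*N - N*X = X*N + X*N" using h1 by simp
  have f1: "X*N*D = -(X*D*N)" using h2 by (simp add: mult.assoc)
  have b: "D*(X*N) + (X*N)*D = (D*X - X*D)*N"
  proof -
    have "D*(X*N) + (X*N)*D = D*X*N + X*N*D" by (simp only: mult.assoc)
    also have "\<dots> = D*X*N + -(X*D*N)" by (simp only: f1)
    also have "\<dots> = (D*X - X*D)*N" by (simp add: algebra_simps)
    finally show ?thesis .
  qed
  define W where "W = X*N"
  have "D*(W+W) + (W+W)*D = (D*W + W*D) + (D*W + W*D)"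
    by (simp only: distrib_left distrib_right add_ac)
  then show ?thesis unfolding a unfolding W_def[symmetric] using b[folded W_def] by (simp only: mult_2)
qed

context chm begin

lemma Pop_scale: "Pop c x xi e (c \<mu> * y) False = c \<mu> * Pop c x xi e y False"
proof -
  define X where "X = xu x e"
  define D where "D = Du xi e"
  define W where "W = X*y - y*X"
  have w: "X*(c \<mu> * y) - (c \<mu> * y)*X = c \<mu> * W" unfolding W_def by (simp only: c_lc[of X] mult.assoc right_diff_distrib)
  have v: "D*(c \<mu> * W) + (c \<mu> * W)*D = c \<mu> * (D*W + W*D)" by (simp only: c_lc[of D] mult.assoc distrib_left)
  have "Pop c x xi e (c \<mu> * y) False = c \<mu> * y - c (1/2) * (D*(X*(c \<mu> * y) - (c \<mu> * y)*X) + (X*(c \<mu> * y) - (c \<mu> * y)*X)*D)"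
    unfolding Pop_def gcomm_def X_def D_def by simp
  also have "\<dots> = c \<mu> * y - c (1/2) * (c \<mu> * (D*W + W*D))" by (simp only: w v)
  also have "\<dots> = c \<mu> * (y - c (1/2) * (D*W + W*D))" by (simp only: c_lc[of "c (1/2)"] right_diff_distrib)
  also have "y - c (1/2) * (D*W + W*D) = Pop c x xi e y False"
    unfolding Pop_def gcomm_def X_def D_def W_def by simp
  finally show ?thesis .
qed

lemma half2: "c (1/2) * (2 * z) = z"
  by (simp add: mult.assoc[symmetric] c_half)

lemma Pop_NN:
  fixes p q r s :: nat
  assumes PQ: "(p = 1 \<and> q = 2 \<and> r = 3 \<and> s = 4) \<or> (p = 3 \<and> q = 4 \<and> r = 1 \<and> s = 2)"
  shows "Pop c x xi e (NN p q) False = MI p q"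
proof -
  have h1: "NN p q * XI p q = - (XI p q * NN p q)"
    using PQ acm_sp[OF f_NX_12] acm_sp[OF f_NX_34] by (auto simp: acm_def)
  have h2: "NN p q * XI r s = XI r s * NN p q"
    using PQ cm_sp[OF f_NXo_12] cm_sp[OF f_NXo_34] by (auto simp: cm_def)
  have h3: "NN p q * DI p q = - (DI p q * NN p q)"
    using PQ acm_sp[OF f_ND_12] acm_sp[OF f_ND_34] by (auto simp: acm_def)
  have h4: "NN p q * DI r s = DI r s * NN p q"
    using PQ cm_sp[OF f_NDo_12] cm_sp[OF f_NDo_34] by (auto simp: cm_def)
  have h5: "DI r s * XI p q = - (XI p q * DI r s)"
    using PQ acm_sp[OF f_DX_12] acm_sp[OF f_DX_34] by (auto simp: acm_def)
  have X: "xu x e = XI p q + XI r s" using PQ XX_split by (auto simp: add.commute)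
  have D: "Du xi e = DI p q + DI r s" using PQ DD_split by (auto simp: add.commute)
  have "Pop c x xi e (NN p q) False = NN p q - c (1/2) * ((DI p q + DI r s) * ((XI p q + XI r s) * NN p q - NN p q * (XI p q + XI r s))
      + ((XI p q + XI r s) * NN p q - NN p q * (XI p q + XI r s)) * (DI p q + DI r s))"
    unfolding Pop_def gcomm_def X D by simp
  also have "\<dots> = NN p q - CI p q * NN p q" unfolding pop_alg[OF h1 h2 h3 h4 h5] half2 CI_def ..
  also have "\<dots> = MI p q" unfolding MI_def by (simp add: algebra_simps)
  finally show ?thesis .
qed

lemma Pop_EE: "Pop c x xi e EE False = ZZ"
proof -
  have h1: "EE * xu x e = - (xu x e * EE)" unfolding XX_split
    using acm_sp[OF spR_add[OF f_EX_12 f_EX_34 beq_refl beq_refl]] by (simp add: acm_def)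
  have h2: "EE * Du xi e = - (Du xi e * EE)" unfolding DD_split
    using acm_sp[OF spR_add[OF f_ED_12 f_ED_34 beq_refl beq_refl]] by (simp add: acm_def)
  have "Pop c x xi e EE False = EE - c (1/2) * (Du xi e * (xu x e * EE - EE * xu x e) + (xu x e * EE - EE * xu x e) * Du xi e)"
    unfolding Pop_def gcomm_def by simp
  also have "\<dots> = EE - (Du xi e * xu x e - xu x e * Du xi e) * EE" unfolding pop_algE[OF h1 h2] half2 ..
  also have "\<dots> = ZZ" unfolding ZZ_def XX_split[symmetric] DD_split[symmetric] by (simp add: algebra_simps)
  finally show ?thesis .
qed

lemma gvec_basis: assumes "k \<in> {1..4}" shows "gvec c e (basisv k) = e k"
proof -
  have "k = 1 \<or> k = 2 \<or> k = 3 \<or> k = 4" using assms by auto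
  then show ?thesis unfolding gvec_def basisv_def sum4 by (elim disjE) (simp_all add: c_one c_zero)
qed

lemma gwedge4: "gwedge c e [basisv 1, basisv 2, basisv 3, basisv 4] = EE"
proof -
  define vs where "vs = [basisv 1, basisv 2, basisv 3, basisv 4]"
  define u where "u i = gvec c e (vs ! i)" for i
  have uv: "u i = e (i + 1)" if "i < 4" for i
  proof -
    have "i = 0 \<or> i = 1 \<or> i = 2 \<or> i = 3" using that by auto
    then show ?thesis unfolding u_def vs_def by (elim disjE) (simp_all add: gvec_basis eval_nat_numeral)
  qed
  have ac: "\<forall>i j. i < 4 \<longrightarrow> j < 4 \<longrightarrow> i \<noteq> j \<longrightarrow> u i * u j = - (u j * u i)"
  proof (intro allI impI)
    fix i j :: nat assume ij: "i < 4" "j < 4" "i \<noteq> j"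
    have "acm (e (i + 1)) (e (j + 1))" by (rule e_anti) (use ij in auto)
    then show "u i * u j = - (u j * u i)" using ij by (simp add: uv acm_def)
  qed
  define P where "P = prod_list (map u [0..<4])"
  have P: "P = EE" unfolding P_def EE_def by (simp add: upt_rec uv mult.assoc eval_nat_numeral)
  have trm2: "c (of_int (sign \<sigma>)) * prod_list (map (\<lambda>i. gvec c e (vs ! \<sigma> i)) [0..<4]) = P"
    if s: "\<sigma> permutes {0..<4}" for \<sigma>
  proof -
    have "prod_list (map (\<lambda>i. gvec c e (vs ! \<sigma> i)) [0..<4]) = prod_list (map (\<lambda>i. u (\<sigma> i)) [0..<4])"
      unfolding u_def ..
    also have "\<dots> = of_int (sign \<sigma>) * P" unfolding P_def by (rule mp[OF spec[OF perm_prod[OF s], of u] ac])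
    finally have "c (of_int (sign \<sigma>)) * prod_list (map (\<lambda>i. gvec c e (vs ! \<sigma> i)) [0..<4]) = (of_int (sign \<sigma>) * of_int (sign \<sigma>)) * P"
      by (simp add: c_of_int mult.assoc)
    also have "of_int (sign \<sigma>) * of_int (sign \<sigma>) = (1::'a)"
      by (simp only: of_int_mult[symmetric] sign_idempotent of_int_1)
    finally show ?thesis by simp
  qed
  have card: "card {\<sigma>. \<sigma> permutes {0..<4::nat}} = fact 4" by (rule card_permutations) simp_all
  have len: "length vs = 4" unfolding vs_def by simp
  have "gwedge c e vs = c (1 / of_nat (fact 4)) * (\<Sum>\<sigma>\<in>{\<sigma>. \<sigma> permutes {0..<4::nat}}. c (of_int (sign \<sigma>)) * prod_list (map (\<lambda>i. gvec c e (vs ! \<sigma> i)) [0..<4]))"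
    unfolding gwedge_def len ..
  also have "(\<Sum>\<sigma>\<in>{\<sigma>. \<sigma> permutes {0..<4::nat}}. c (of_int (sign \<sigma>)) * prod_list (map (\<lambda>i. gvec c e (vs ! \<sigma> i)) [0..<4]))
     = (\<Sum>\<sigma>\<in>{\<sigma>. \<sigma> permutes {0..<4::nat}}. P)"
    by (rule sum.cong[OF refl], rule trm2) simp
  also have "(\<Sum>\<sigma>\<in>{\<sigma>. \<sigma> permutes {0..<4::nat}}. P) = of_nat (fact 4) * P" by (simp add: card)
  also have "c (1 / of_nat (fact 4)) * (of_nat (fact 4) * P) = (c (1 / of_nat (fact 4)) * c (of_nat (fact 4))) * P"
    by (simp only: c_of_nat mult.assoc)
  also have "c (1 / of_nat (fact 4)) * c (of_nat (fact 4)) = 1"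
    by (simp add: c_mult[symmetric] c_one del: of_nat_fact)
  finally show ?thesis using P vs_def by simp
qed

lemma gz1: "gvec c e (zplus 1) = e 1 + c \<i> * e 2" unfolding gvec_def zplus_def sum4 by (simp add: c_one c_zero)
lemma gz1m: "gvec c e (zminus 1) = e 1 + c (- \<i>) * e 2" unfolding gvec_def zminus_def sum4 by (simp add: c_one c_zero)
lemma gz2: "gvec c e (zplus 2) = e 3 + c \<i> * e 4" unfolding gvec_def zplus_def sum4 by (simp add: c_one c_zero)
lemma gz2m: "gvec c e (zminus 2) = e 3 + c (- \<i>) * e 4" unfolding gvec_def zminus_def sum4 by (simp add: c_one c_zero)

lemma uv_comm:
  assumes pq: "p \<in> {1..4}" "q \<in> {1..4}" "p \<noteq> q"
  shows "(e p + c l * e q) * (e p + c n * e q) - (e p + c n * e q) * (e p + c l * e q) = c (2 * (n - l)) * NN p q"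
proof -
  have ep: "e p * e p = 1" using e_sq pq by blast
  have eq: "e q * e q = 1" using e_sq pq by blast
  have qp: "e q * e p = - (e p * e q)" using e_anti[OF pq(2,1)] pq(3) by (simp add: acm_def)
  have A: "(e p + c a * e q) * (e p + c b * e q) = 1 + c b * NN p q - c a * NN p q + c (a * b)" for a b
  proof -
    have "(e p + c a * e q) * (e p + c b * e q) = e p * e p + e p * (c b * e q) + (c a * e q) * e p + (c a * e q) * (c b * e q)"
      by (simp add: distrib_left distrib_right add.assoc)
    also have "\<dots> = e p * e p + c b * (e p * e q) + c a * (e q * e p) + c a * (c b * (e q * e q))"
      by (simp only: c_lc[of "e p"] c_lc[of "e q"] mult.assoc)
    also have "\<dots> = 1 + c b * NN p q - c a * NN p q + c (a * b)"
      by (simp add: ep eq qp NN_def c_mult)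
    finally show ?thesis .
  qed
  have c2: "c (2 * (n - l)) = 2 * (c n - c l)" by (simp add: c_mult c_numeral c_diff)
  have ln: "c (n * l) = c (l * n)" by (simp add: mult.commute)
  show ?thesis unfolding A c2 ln by (simp add: algebra_simps mult_2)
qed

end

theorem proposition4p2:
  fixes m1 m2 :: nat
    and \<kappa> :: "(nat \<Rightarrow> real) \<Rightarrow> complex"
    and c :: "complex \<Rightarrow> 'a::ring_1"
    and x xi e :: "nat \<Rightarrow> 'a"
    and g :: "(nat \<Rightarrow> nat \<Rightarrow> real) \<Rightarrow> 'a"
  assumes "0 < m1" and "0 < m2"
    and "\<forall>w\<in>weyl m1 m2. \<forall>a\<in>roots m1 m2. \<kappa> (mat_vec w a) = \<kappa> a"
    and "CH_model m1 m2 \<kappa> c x xi g e"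
  defines "H1 \<equiv> c (1/2) * Oop c x xi e [zplus 1, zminus 1]"
    and "H2 \<equiv> c (1/2) * Oop c x xi e [zplus 2, zminus 2]"
    and "Z \<equiv> Oop c x xi e [basisv 1, basisv 2, basisv 3, basisv 4]"
    and "r1 \<equiv> - (stilde c g e (alpha m1 m1) * stilde c g e (alpha m1 1))"
    and "r2 \<equiv> - (stilde c g e (beta m2 m2) * stilde c g e (beta m2 1))"
  shows "\<forall>u\<in>set [H1, H2, Z, r1, r2]. \<forall>v\<in>set [H1, H2, Z, r1, r2]. u * v = v * u"
proof -
  interpret chm m1 m2 \<kappa> c x xi e g by (rule chm.intro) (rule assms(4))
  have a1: "alpha m1 m1 \<in> roots m1 m2" using assms(1) unfolding roots_def by auto
  have a2: "alpha m1 1 \<in> roots m1 m2" using assms(1) unfolding roots_def by auto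
  have b1: "beta m2 m2 \<in> roots m1 m2" using assms(2) unfolding roots_def by auto
  have b2: "beta m2 1 \<in> roots m1 m2" using assms(2) unfolding roots_def by auto
  have RC: "cm r1 (MI 1 2)" "cm r1 (MI 3 4)" "cm r1 ZZ" "cm r2 (MI 1 2)" "cm r2 (MI 3 4)" "cm r2 ZZ" "cm r1 r2"
    unfolding r1_def r2_def
    by (rule r_comm[OF a1 _ _ a2 _ _ b1 _ _ b2]; simp add: alpha_supp beta_supp)+
  have gw1: "gwedge c e [zplus 1, zminus 1] = c (1/2 * (2 * (- \<i> - \<i>))) * NN 1 2"
  proof -
    have u: "(e 1 + c \<i> * e 2) * (e 1 + c (- \<i>) * e 2) - (e 1 + c (- \<i>) * e 2) * (e 1 + c \<i> * e 2) = c (2 * (- \<i> - \<i>)) * NN 1 2"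
      by (rule uv_comm) simp_all
    show ?thesis unfolding gwedge2 gz1 gz1m u by (simp only: c_mult mult.assoc)
  qed
  have gw2: "gwedge c e [zplus 2, zminus 2] = c (1/2 * (2 * (- \<i> - \<i>))) * NN 3 4"
  proof -
    have u: "(e 3 + c \<i> * e 4) * (e 3 + c (- \<i>) * e 4) - (e 3 + c (- \<i>) * e 4) * (e 3 + c \<i> * e 4) = c (2 * (- \<i> - \<i>)) * NN 3 4"
      by (rule uv_comm) simp_all
    show ?thesis unfolding gwedge2 gz2 gz2m u by (simp only: c_mult mult.assoc)
  qed
  have eH1: "H1 = c (1/2) * (- (c (1/2) * (c (1/2 * (2 * (- \<i> - \<i>))) * MI 1 2)))"
    unfolding H1_def Oop_def gw1 by (simp add: Pop_scale Pop_NN)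
  have eH2: "H2 = c (1/2) * (- (c (1/2) * (c (1/2 * (2 * (- \<i> - \<i>))) * MI 3 4)))"
    unfolding H2_def Oop_def gw2 by (simp add: Pop_scale Pop_NN)
  have eZ: "Z = - (c (1/2) * ZZ)"
    unfolding Z_def Oop_def gwedge4 by (simp add: Pop_EE)
  have fa1: "sp False (MI 1 2) (MI 1 2)" by (rule sp_cm, rule cm_refl)
  have fa2: "sp False (MI 1 2) (MI 3 4)" by (rule sp_cm, rule MM_comm)
  have fa3: "sp False (MI 1 2) (ZZ)" by (rule sp_cm, rule MZ1)
  have fa4: "sp False (MI 1 2) (r1)" by (rule sp_cm, rule cm_sym, rule RC(1))
  have fa5: "sp False (MI 1 2) (r2)" by (rule sp_cm, rule cm_sym, rule RC(4))
  have fa6: "sp False (MI 3 4) (MI 1 2)" by (rule sp_cm, rule cm_sym, rule MM_comm)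
  have fa7: "sp False (MI 3 4) (MI 3 4)" by (rule sp_cm, rule cm_refl)
  have fa8: "sp False (MI 3 4) (ZZ)" by (rule sp_cm, rule MZ2)
  have fa9: "sp False (MI 3 4) (r1)" by (rule sp_cm, rule cm_sym, rule RC(2))
  have fa10: "sp False (MI 3 4) (r2)" by (rule sp_cm, rule cm_sym, rule RC(5))
  have fa11: "sp False (ZZ) (MI 1 2)" by (rule sp_cm, rule cm_sym, rule MZ1)
  have fa12: "sp False (ZZ) (MI 3 4)" by (rule sp_cm, rule cm_sym, rule MZ2)
  have fa13: "sp False (ZZ) (ZZ)" by (rule sp_cm, rule cm_refl)
  have fa14: "sp False (ZZ) (r1)" by (rule sp_cm, rule cm_sym, rule RC(3))
  have fa15: "sp False (ZZ) (r2)" by (rule sp_cm, rule cm_sym, rule RC(6))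
  have fa16: "sp False (r1) (MI 1 2)" by (rule sp_cm, rule RC(1))
  have fa17: "sp False (r1) (MI 3 4)" by (rule sp_cm, rule RC(2))
  have fa18: "sp False (r1) (ZZ)" by (rule sp_cm, rule RC(3))
  have fa19: "sp False (r1) (r1)" by (rule sp_cm, rule cm_refl)
  have fa20: "sp False (r1) (r2)" by (rule sp_cm, rule RC(7))
  have fa21: "sp False (r2) (MI 1 2)" by (rule sp_cm, rule RC(4))
  have fa22: "sp False (r2) (MI 3 4)" by (rule sp_cm, rule RC(5))
  have fa23: "sp False (r2) (ZZ)" by (rule sp_cm, rule RC(6))
  have fa24: "sp False (r2) (r1)" by (rule sp_cm, rule cm_sym, rule RC(7))
  have fa25: "sp False (r2) (r2)" by (rule sp_cm, rule cm_refl)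
  have all: "\<forall>u\<in>set [H1, H2, Z, r1, r2]. \<forall>v\<in>set [H1, H2, Z, r1, r2]. cm u v"
    unfolding eH1 eH2 eZ
    by (simp only: list.set ball_simps, intro conjI TrueI; (rule cm_sp, (rule spR spL fa1 fa2 fa3 fa4 fa5 fa6 fa7 fa8 fa9 fa10 fa11 fa12 fa13 fa14 fa15 fa16 fa17 fa18 fa19 fa20 fa21 fa22 fa23 fa24 fa25 spL_c spR_c)+))
  show ?thesis using all[unfolded cm_def] .
qed


end
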